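(* Let $\Psi$ be a commuting interaction on a finite graph $\Lambda$, let $F:[0,\infty)\to(0,\infty)$ be a decaying function and assume $\|\Psi\|_F<\infty$. Then for all $t\in\mathbb{R}$: (i) for all disjoint $X,Y\subset\Lambda$ and $A\in\mathcal{A}_X$, $B\in\mathcal{A}_Y$, $$\big\|[\tau^\Lambda_t(A),B]\big\|\le 4\,\|\Psi\|_F\,\|A\|\,\|B\|\,|t|\sum_{x\in X}\sum_{y\in Y}F(d(x,y));$$ (ii) for all $X\subset\Lambda$, $A\in\mathcal{A}_X$ and $r\ge0$, $$\big\|\tau^\Lambda_t(A)-\mathbb{E}_{X_r}[\tau^\Lambda_t(A)]\big\|\le 4\,\|\Psi\|_F\,\|A\|\,|t|\sum_{x\in X}\sum_{y\in\Lambda\setminus X_r}F(d(x,y)).$$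
   Context: $\Lambda$ has graph distance $d$. Each site carries $\mathbb{C}^q$, $\mathcal{A}_Z=\mathcal{B}(\bigotimes_{x\in Z}\mathbb{C}^q)$ embedded in $\mathcal{A}_\Lambda$ via $A\mapsto A\otimes\mathbf{1}$. An interaction assigns to each $Z\subset\Lambda$ a self-adjoint $\Psi(Z)\in\mathcal{A}_Z$; commuting means $[\Psi(Z),\Psi(Z')]=0$ for all $Z,Z'$. $\|\Psi\|_F=\sup_{x,y\in\Lambda}\sum_{Z\ni x,y}\|\Psi(Z)\|/F(d(x,y))$. $H_\Lambda=\sum_{Z\subset\Lambda}\Psi(Z)$, $\tau^\Lambda_t(A)=e^{itH_\Lambda}Ae^{-itH_\Lambda}$. $X_r=\{z\in\Lambda:\mathrm{dist}(z,X)\le r\}$ and $\mathbb{E}_{X_r}(A)=\frac{1}{\mathrm{tr}_{\Lambda\setminus X_r}\mathbf{1}}\mathrm{tr}_{\Lambda\setminus X_r}(A)$ is the normalized partial trace over $\Lambda\setminus X_r$. *)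

theory Defs
  imports "HOL-Analysis.Analysis"
begin

text \<open>Sites: a finite type 'a (the vertex set Lambda).  One-site space C^q with
  q = CARD('q).  The Hilbert space of Lambda is C^(configurations), a configuration
  being a function 'a => 'q (computational basis).\<close>

type_synonym ('a, 'q) obs = "complex ^ ('a \<Rightarrow> 'q) ^ ('a \<Rightarrow> 'q)"

definition walk_len :: "('a \<Rightarrow> 'a \<Rightarrow> bool) \<Rightarrow> nat \<Rightarrow> 'a \<Rightarrow> 'a \<Rightarrow> bool" where
  "walk_len E n x y \<longleftrightarrow>
     (\<exists>p::nat \<Rightarrow> 'a. p 0 = x \<and> p n = y \<and> (\<forall>i<n. E (p i) (p (Suc i))))"

definition connected_graph :: "('a \<Rightarrow> 'a \<Rightarrow> bool) \<Rightarrow> bool" where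
  "connected_graph E \<longleftrightarrow> (\<forall>x y. \<exists>n. walk_len E n x y)"

definition graph_dist :: "('a \<Rightarrow> 'a \<Rightarrow> bool) \<Rightarrow> 'a \<Rightarrow> 'a \<Rightarrow> real" where
  "graph_dist E x y = real (LEAST n. walk_len E n x y)"

definition nbhd :: "('a \<Rightarrow> 'a \<Rightarrow> bool) \<Rightarrow> 'a set \<Rightarrow> real \<Rightarrow> 'a set" where
  "nbhd E X r = {z. \<exists>x\<in>X. graph_dist E z x \<le> r}"

definition opnorm :: "complex ^ 'n ^ 'm \<Rightarrow> real" where
  "opnorm A = onorm (\<lambda>v::complex ^ 'n. A *v v)"

definition cadj :: "complex ^ 'n ^ 'n \<Rightarrow> complex ^ 'n ^ 'n" where
  "cadj A = (\<chi> i j. cnj (A $ j $ i))"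

definition self_adjoint :: "complex ^ 'n ^ 'n \<Rightarrow> bool" where
  "self_adjoint A \<longleftrightarrow> cadj A = A"

definition cscale :: "complex \<Rightarrow> complex ^ 'n ^ 'm \<Rightarrow> complex ^ 'n ^ 'm" where
  "cscale c A = (\<chi> i j. c * A $ i $ j)"

fun mpow :: "complex ^ 'n ^ 'n \<Rightarrow> nat \<Rightarrow> complex ^ 'n ^ 'n" where
  "mpow M 0 = mat 1"
| "mpow M (Suc k) = M ** mpow M k"

definition mexp :: "complex ^ 'n ^ 'n \<Rightarrow> complex ^ 'n ^ 'n" where
  "mexp M = (\<Sum>k. (1 / fact k) *\<^sub>R mpow M k)"

definition commutator :: "complex ^ 'n ^ 'n \<Rightarrow> complex ^ 'n ^ 'n \<Rightarrow> complex ^ 'n ^ 'n" where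
  "commutator A B = A ** B - B ** A"

definition restr :: "'a set \<Rightarrow> ('a \<Rightarrow> 'q) \<Rightarrow> ('a \<Rightarrow> 'q)" where
  "restr Z \<sigma> = (\<lambda>x. if x \<in> Z then \<sigma> x else undefined)"

text \<open>Configurations of the sites in Z (the basis of the tensor product over Z).\<close>
definition configs_on :: "'a set \<Rightarrow> ('a \<Rightarrow> 'q) set" where
  "configs_on Z = {\<rho>. \<forall>x. x \<notin> Z \<longrightarrow> \<rho> x = undefined}"

text \<open>Embedding a \<mapsto> a \<otimes> 1 of an operator a on the sites Z (matrix indexed by
  configurations on Z) into A_Lambda.\<close>
definition embed :: "'a set \<Rightarrow> (('a \<Rightarrow> 'q) \<Rightarrow> ('a \<Rightarrow> 'q) \<Rightarrow> complex) \<Rightarrow> ('a::finite, 'q::finite) obs" where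
  "embed Z a = (\<chi> \<sigma> \<tau>. if (\<forall>x. x \<notin> Z \<longrightarrow> \<sigma> x = \<tau> x) then a (restr Z \<sigma>) (restr Z \<tau>) else 0)"

definition local_alg :: "'a set \<Rightarrow> ('a::finite, 'q::finite) obs set" where
  "local_alg Z = range (embed Z)"

text \<open>Normalized partial trace over Lambda \ S, result viewed in A_S (embedded).\<close>
definition cond_exp :: "'a set \<Rightarrow> ('a::finite, 'q::finite) obs \<Rightarrow> ('a, 'q) obs" where
  "cond_exp S A = embed S (\<lambda>\<sigma> \<tau>.
      (\<Sum>\<rho>\<in>configs_on (- S). A $ (\<lambda>x. if x \<in> S then \<sigma> x else \<rho> x)
                                    $ (\<lambda>x. if x \<in> S then \<tau> x else \<rho> x))
      / of_nat (card (configs_on (- S) :: ('a \<Rightarrow> 'q) set)))"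

definition interaction :: "('a set \<Rightarrow> ('a::finite, 'q::finite) obs) \<Rightarrow> bool" where
  "interaction \<Psi> \<longleftrightarrow> (\<forall>Z. \<Psi> Z \<in> local_alg Z \<and> self_adjoint (\<Psi> Z))"

definition commuting :: "('a set \<Rightarrow> ('a::finite, 'q::finite) obs) \<Rightarrow> bool" where
  "commuting \<Psi> \<longleftrightarrow> (\<forall>Z Z'. commutator (\<Psi> Z) (\<Psi> Z') = 0)"

definition hamiltonian :: "('a set \<Rightarrow> ('a::finite, 'q::finite) obs) \<Rightarrow> ('a, 'q) obs" where
  "hamiltonian \<Psi> = (\<Sum>Z\<in>(UNIV :: 'a set set). \<Psi> Z)"

definition tau :: "('a set \<Rightarrow> ('a::finite, 'q::finite) obs) \<Rightarrow> real \<Rightarrow> ('a, 'q) obs \<Rightarrow> ('a, 'q) obs" where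
  "tau \<Psi> t A = mexp (cscale (\<i> * of_real t) (hamiltonian \<Psi>)) ** A
                  ** mexp (cscale (- \<i> * of_real t) (hamiltonian \<Psi>))"

definition decaying :: "(real \<Rightarrow> real) \<Rightarrow> bool" where
  "decaying F \<longleftrightarrow> (\<forall>r\<ge>0. F r > 0) \<and> (\<forall>r s. 0 \<le> r \<and> r \<le> s \<longrightarrow> F s \<le> F r)"

definition F_norm :: "('a \<Rightarrow> 'a \<Rightarrow> bool) \<Rightarrow> (real \<Rightarrow> real) \<Rightarrow> ('a set \<Rightarrow> ('a::finite, 'q::finite) obs) \<Rightarrow> real" where
  "F_norm E F \<Psi> = Max {(\<Sum>Z\<in>{Z. x \<in> Z \<and> y \<in> Z}. opnorm (\<Psi> Z)) / F (graph_dist E x y) | x y. True}"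

end

theory Submission
  imports Defs "HOL-Analysis.Analysis"
begin


typedef (overloaded) ('n::finite) cop = "UNIV :: ((complex^'n) \<Rightarrow>\<^sub>L (complex^'n)) set"
  morphisms bl_of cop_of by simp

setup_lifting type_definition_cop

instantiation cop :: (finite) real_normed_algebra_1
begin
lift_definition zero_cop :: "'a cop" is 0 .
lift_definition one_cop :: "'a cop" is id_blinfun .
lift_definition plus_cop :: "'a cop \<Rightarrow> 'a cop \<Rightarrow> 'a cop" is "(+)" .
lift_definition minus_cop :: "'a cop \<Rightarrow> 'a cop \<Rightarrow> 'a cop" is "(-)" .
lift_definition uminus_cop :: "'a cop \<Rightarrow> 'a cop" is "uminus" .
lift_definition times_cop :: "'a cop \<Rightarrow> 'a cop \<Rightarrow> 'a cop" is "(o\<^sub>L)" .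
lift_definition scaleR_cop :: "real \<Rightarrow> 'a cop \<Rightarrow> 'a cop" is "scaleR" .
lift_definition norm_cop :: "'a cop \<Rightarrow> real" is norm .
definition dist_cop :: "'a cop \<Rightarrow> 'a cop \<Rightarrow> real" where "dist_cop a b = norm (a - b)"
definition uniformity_cop :: "('a cop \<times> 'a cop) filter" where
  "uniformity_cop = (INF e\<in>{0 <..}. principal {(x, y). dist x y < e})"
definition open_cop :: "'a cop set \<Rightarrow> bool" where
  "open_cop S = (\<forall>x\<in>S. \<forall>\<^sub>F (x', y) in uniformity. x' = x \<longrightarrow> y \<in> S)"
definition sgn_cop :: "'a cop \<Rightarrow> 'a cop" where "sgn_cop x = scaleR (inverse (norm x)) x"
instance
proof
  fix a b c :: "'a cop" and r s :: real
  show "a * b * c = a * (b * c)" by transfer (auto intro: blinfun_eqI)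
  show "(a + b) * c = a * c + b * c" by transfer (auto intro: blinfun_eqI simp: blinfun.bilinear_simps)
  show "a * (b + c) = a * b + a * c" by transfer (auto intro: blinfun_eqI simp: blinfun.bilinear_simps)
  show "1 * a = a" by transfer (auto intro: blinfun_eqI)
  show "a * 1 = a" by transfer (auto intro: blinfun_eqI)
  show "(0::'a cop) \<noteq> 1" apply transfer
    by (metis blinfun.zero_left blinfun_apply_id_blinfun axis_nth zero_index zero_neq_one)
  show "r *\<^sub>R a * b = r *\<^sub>R (a * b)" by transfer (auto intro: blinfun_eqI simp: blinfun.bilinear_simps)
  show "a * r *\<^sub>R b = r *\<^sub>R (a * b)" by transfer (auto intro: blinfun_eqI simp: blinfun.bilinear_simps)
  show "norm (a * b) \<le> norm a * norm b" by transfer (rule norm_blinfun_compose)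
  show "norm (1::'a cop) = 1" by transfer (rule norm_blinfun_id)
  show "a + b + c = a + (b + c)" by transfer simp
  show "a + b = b + a" by transfer simp
  show "0 + a = a" by transfer simp
  show "- a + a = 0" by transfer simp
  show "a - b = a + - b" by transfer simp
  show "r *\<^sub>R (a + b) = r *\<^sub>R a + r *\<^sub>R b" by transfer (simp add: scaleR_add_right)
  show "(r + s) *\<^sub>R a = r *\<^sub>R a + s *\<^sub>R a" by transfer (simp add: scaleR_add_left)
  show "r *\<^sub>R s *\<^sub>R a = (r * s) *\<^sub>R a" by transfer simp
  show "1 *\<^sub>R a = a" by transfer simp
  show "dist a b = norm (a - b)" by (simp add: dist_cop_def)
  show "sgn a = inverse (norm a) *\<^sub>R a" by (simp add: sgn_cop_def)
  show "(uniformity :: ('a cop \<times> 'a cop) filter) = (INF e\<in>{0 <..}. principal {(x, y). dist x y < e})"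
    by (simp add: uniformity_cop_def)
  show "open U = (\<forall>x\<in>U. \<forall>\<^sub>F (x', y) in uniformity. x' = x \<longrightarrow> y \<in> U)" for U :: "'a cop set"
    by (simp add: open_cop_def)
  show "(norm a = 0) = (a = 0)" by transfer simp
  show "norm (a + b) \<le> norm a + norm b" by transfer (rule norm_triangle_ineq)
  show "norm (r *\<^sub>R a) = \<bar>r\<bar> * norm a" by transfer simp
qed
end

lemma norm_cop_bl: "norm x = norm (bl_of x)" by transfer simp
lemma dist_cop_bl: "dist x y = dist (bl_of x) (bl_of y)"
  by (simp add: dist_cop_def dist_norm norm_cop_bl minus_cop.rep_eq)

instance cop :: (finite) banach
proof
  fix X :: "nat \<Rightarrow> 'a cop"
  assume "Cauchy X"
  then have "Cauchy (\<lambda>n. bl_of (X n))" unfolding Cauchy_def by (simp add: dist_cop_bl)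
  then obtain L where L: "(\<lambda>n. bl_of (X n)) \<longlonglongrightarrow> L" using Cauchy_convergent_iff convergent_def by blast
  have "X \<longlonglongrightarrow> cop_of L"
    using L unfolding tendsto_iff by (simp add: dist_cop_bl cop_of_inverse)
  then show "convergent X" by (auto simp: convergent_def)
qed


section \<open>Matrices as operators\<close>

lemma mv_scaleR: "(M::complex^'n^'m) *v (r *\<^sub>R x) = r *\<^sub>R (M *v x)"
  by (simp add: vec_eq_iff matrix_vector_mult_def scaleR_sum_right mult_scaleR_right)

lemma linear_mv: "linear (\<lambda>v::complex^'n. (M::complex^'n^'m) *v v)"
  by (rule linearI) (simp_all add: matrix_vector_right_distrib mv_scaleR)

lemma bounded_linear_mv: "bounded_linear (\<lambda>v::complex^'n. (M::complex^'n^'m) *v v)"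
  using linear_mv linear_conv_bounded_linear by blast

definition mop :: "complex^'n^'n \<Rightarrow> 'n::finite cop" where
  "mop M = cop_of (Blinfun (\<lambda>v. M *v v))"

lemma mop_apply[simp]: "blinfun_apply (bl_of (mop M)) v = M *v v"
  by (simp add: mop_def cop_of_inverse bounded_linear_Blinfun_apply bounded_linear_mv)

lemma mop_apply_fun: "blinfun_apply (bl_of (mop M)) = (\<lambda>v. M *v v)"
  by (rule ext) simp

lemma cop_eqI: "(\<And>v. blinfun_apply (bl_of x) v = blinfun_apply (bl_of y) v) \<Longrightarrow> x = y"
  by (metis blinfun_eqI bl_of_inject)

lemma opnorm_mop: "opnorm M = norm (mop M)"
  by (simp add: opnorm_def norm_cop_bl norm_blinfun.rep_eq mop_apply_fun)

lemma mop_mult: "mop (M ** N) = mop M * mop N"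
  by (rule cop_eqI) (simp add: times_cop.rep_eq matrix_vector_mul_assoc)

lemma mop_one: "mop (mat 1) = 1"
  by (rule cop_eqI) (simp add: one_cop.rep_eq)

lemma mop_add: "mop (M + N) = mop M + mop N"
  by (rule cop_eqI) (simp add: plus_cop.rep_eq blinfun.bilinear_simps matrix_vector_mult_add_rdistrib)

lemma mop_diff: "mop (M - N) = mop M - mop N"
  by (rule cop_eqI) (simp add: minus_cop.rep_eq blinfun.bilinear_simps matrix_vector_mult_diff_rdistrib)

lemma mop_zero: "mop 0 = 0"
  by (rule cop_eqI) (simp add: zero_cop.rep_eq)

lemma mop_scaleR: "mop (r *\<^sub>R M) = r *\<^sub>R mop M"
  by (rule cop_eqI) (simp add: scaleR_cop.rep_eq blinfun.bilinear_simps vec_eq_iff matrix_vector_mult_def scaleR_sum_right)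

lemma mop_sum: "mop (sum f S) = (\<Sum>x\<in>S. mop (f x))"
  by (induction S rule: infinite_finite_induct) (simp_all add: mop_zero mop_add)

lemma mop_mpow: "mop (mpow M k) = mop M ^ k"
  by (induction k) (simp_all add: mop_one mop_mult)

definition matof :: "'n::finite cop \<Rightarrow> complex^'n^'n" where
  "matof x = (\<chi> i j. (blinfun_apply (bl_of x) (axis j 1)) $ i)"

lemma matof_mop: "matof (mop M) = M"
  by (simp add: matof_def vec_eq_iff matrix_vector_mult_def axis_def if_distrib[of "\<lambda>x. _ * x"] cong: if_cong)

lemma matof_add: "matof (x + y) = matof x + matof y"
  by (simp add: matof_def vec_eq_iff plus_cop.rep_eq plus_blinfun.rep_eq)

lemma matof_scaleR: "matof (r *\<^sub>R x) = r *\<^sub>R matof x"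
  by (simp add: matof_def vec_eq_iff scaleR_cop.rep_eq scaleR_blinfun.rep_eq)

lemma norm_axis_c: "norm (axis j (1::complex)) = 1"
proof -
  have "(\<Sum>i\<in>UNIV. (norm (axis j (1::complex) $ i))\<^sup>2) = (\<Sum>i\<in>UNIV. if i = j then 1 else 0)"
    by (rule sum.cong) (auto simp: axis_def)
  then show ?thesis unfolding norm_vec_def L2_set_def by simp
qed

lemma bounded_linear_matof: "bounded_linear (matof :: 'n::finite cop \<Rightarrow> _)"
proof (rule bounded_linear_intro[where K = "real (CARD('n) * CARD('n))"])
  fix x y :: "'n cop" and r :: real
  show "matof (x + y) = matof x + matof y" by (rule matof_add)
  show "matof (r *\<^sub>R x) = r *\<^sub>R matof x" by (rule matof_scaleR)
  have e: "norm (matof x $ i $ j) \<le> norm x" for i j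
  proof -
    have "norm (matof x $ i $ j) \<le> norm (blinfun_apply (bl_of x) (axis j 1))"
      unfolding matof_def by (simp only: vec_lambda_beta Finite_Cartesian_Product.norm_nth_le)
    also have "\<dots> \<le> norm (bl_of x) * norm (axis j (1::complex))" by (rule norm_blinfun)
    finally show ?thesis by (simp add: norm_cop_bl norm_axis_c)
  qed
  have "norm (matof x) \<le> (\<Sum>i\<in>UNIV. norm (matof x $ i))"
    unfolding norm_vec_def by (rule L2_set_le_sum) simp
  also have "\<dots> \<le> (\<Sum>i\<in>(UNIV::'n set). \<Sum>j\<in>(UNIV::'n set). norm (matof x $ i $ j))"
    by (intro sum_mono) (unfold norm_vec_def, rule L2_set_le_sum, simp)
  also have "\<dots> \<le> (\<Sum>i\<in>(UNIV::'n set). \<Sum>j\<in>(UNIV::'n set). norm x)"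
    by (intro sum_mono e)
  finally show "norm (matof x) \<le> norm x * real (CARD('n) * CARD('n))"
    by (simp add: mult_ac)
qed

lemma mexp_summable: "summable (\<lambda>k. (1 / fact k) *\<^sub>R mpow (M::complex^'n::finite^'n) k)"
proof -
  have "summable (\<lambda>k. (mop M)^k /\<^sub>R fact k)" using exp_converges sums_summable by blast
  then have "summable (\<lambda>k. matof ((mop M)^k /\<^sub>R fact k))"
    using bounded_linear.summable[OF bounded_linear_matof] by blast
  moreover have "matof ((mop M)^k /\<^sub>R fact k) = (1 / fact k) *\<^sub>R mpow M k" for k
    by (simp add: mop_mpow[symmetric] matof_mop divide_inverse matof_scaleR)
  ultimately show ?thesis by simp
qed

lemma bounded_linear_mop: "bounded_linear (mop :: complex^'n^'n \<Rightarrow> 'n::finite cop)"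
proof -
  have "linear (mop :: complex^'n^'n \<Rightarrow> 'n::finite cop)"
    by (rule linearI) (simp_all add: mop_add mop_scaleR)
  then show ?thesis using linear_conv_bounded_linear by blast
qed

lemma mop_mexp: "mop (mexp M) = exp (mop M)"
proof -
  have "mop (mexp M) = (\<Sum>k. mop ((1 / fact k) *\<^sub>R mpow M k))"
    unfolding mexp_def by (rule bounded_linear.suminf[OF bounded_linear_mop mexp_summable])
  also have "\<dots> = (\<Sum>k. (mop M)^k /\<^sub>R fact k)"
    by (simp add: mop_scaleR mop_mpow divide_inverse)
  finally show ?thesis by (simp add: exp_def)
qed


section \<open>Exponentials of skew operators\<close>

lemma exp_commute:
  fixes x y :: "'a::{real_normed_algebra_1,banach}"
  assumes "x * y = y * x"
  shows "exp x * y = y * exp x"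
proof -
  have s: "summable (\<lambda>n. x^n /\<^sub>R fact n)" by (rule summable_exp_generic)
  have "exp x * y = (\<Sum>n. x^n /\<^sub>R fact n * y)"
    unfolding exp_def by (rule suminf_mult2[OF s])
  also have "\<dots> = (\<Sum>n. y * (x^n /\<^sub>R fact n))"
    by (simp add: power_commuting_commutes[OF assms])
  also have "\<dots> = y * exp x"
    unfolding exp_def by (rule suminf_mult[OF s])
  finally show ?thesis .
qed

definition skew :: "'n::finite cop \<Rightarrow> bool" where
  "skew x \<longleftrightarrow> (\<forall>v. inner (blinfun_apply (bl_of x) v) v = 0)"

lemma apply_exp_deriv:
  fixes x :: "'n::finite cop"
  shows "((\<lambda>s. blinfun_apply (bl_of (exp (s *\<^sub>R x))) v) has_derivative
     (\<lambda>h. h *\<^sub>R blinfun_apply (bl_of x) (blinfun_apply (bl_of (exp (s *\<^sub>R x))) v))) (at s)"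
proof -
  have bl: "bounded_linear (\<lambda>c::'n cop. blinfun_apply (bl_of c) v)"
  proof (rule bounded_linear_intro[where K = "norm v"])
    fix a b :: "'n cop" and r :: real
    show "blinfun_apply (bl_of (a + b)) v = blinfun_apply (bl_of a) v + blinfun_apply (bl_of b) v"
      by (simp add: plus_cop.rep_eq blinfun.bilinear_simps)
    show "blinfun_apply (bl_of (r *\<^sub>R a)) v = r *\<^sub>R blinfun_apply (bl_of a) v"
      by (simp add: scaleR_cop.rep_eq blinfun.bilinear_simps)
    show "norm (blinfun_apply (bl_of a) v) \<le> norm a * norm v"
      by (simp add: norm_cop_bl norm_blinfun)
  qed
  have d: "((\<lambda>s. exp (s *\<^sub>R x)) has_derivative (\<lambda>h. h *\<^sub>R (x * exp (s *\<^sub>R x)))) (at s)"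
    using exp_scaleR_has_vector_derivative_left[of x s] unfolding has_vector_derivative_def .
  from bounded_linear.has_derivative[OF bl d]
  show ?thesis
    by (simp add: scaleR_cop.rep_eq times_cop.rep_eq blinfun.bilinear_simps)
qed

lemma skew_isometry:
  fixes x :: "'n::finite cop"
  assumes "skew x"
  shows "norm (blinfun_apply (bl_of (exp (s *\<^sub>R x))) v) = norm v"
proof -
  let ?f = "\<lambda>s. blinfun_apply (bl_of (exp (s *\<^sub>R x))) v"
  have "((\<lambda>s. inner (?f s) (?f s)) has_derivative (\<lambda>h. 0)) (at s within UNIV)" for s
  proof -
    have "((\<lambda>s. inner (?f s) (?f s)) has_derivative
      (\<lambda>h. inner (?f s) (h *\<^sub>R blinfun_apply (bl_of x) (?f s)) + inner (h *\<^sub>R blinfun_apply (bl_of x) (?f s)) (?f s))) (at s)"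
      by (rule has_derivative_inner[OF apply_exp_deriv apply_exp_deriv])
    moreover have "inner (blinfun_apply (bl_of x) (?f s)) (?f s) = 0"
      using assms unfolding skew_def by blast
    ultimately show ?thesis by (simp add: inner_commute)
  qed
  then obtain c where "\<forall>s\<in>UNIV. inner (?f s) (?f s) = c"
    using has_derivative_zero_constant[of UNIV] by blast
  then have "inner (?f s) (?f s) = inner (?f 0) (?f 0)" by (metis UNIV_I)
  also have "?f 0 = v" by (simp add: one_cop.rep_eq)
  finally show ?thesis by (simp add: norm_eq_sqrt_inner)
qed

lemma skew_exp_norm:
  fixes x :: "'n::finite cop"
  assumes "skew x"
  shows "norm (exp (s *\<^sub>R x)) \<le> 1"
  unfolding norm_cop_bl by (rule norm_blinfun_bound) (simp_all add: skew_isometry[OF assms])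

lemma skew_exp_diff:
  fixes x :: "'n::finite cop"
  assumes "skew x"
  shows "norm (exp (s *\<^sub>R x) - 1) \<le> \<bar>s\<bar> * norm x"
proof -
  let ?f = "\<lambda>u::real. exp (u *\<^sub>R x)"
  have d: "(?f has_derivative (\<lambda>h. h *\<^sub>R (x * exp (u *\<^sub>R x)))) (at u within UNIV)" for u
    using exp_scaleR_has_vector_derivative_left[of x u] unfolding has_vector_derivative_def .
  have b: "onorm (\<lambda>h::real. h *\<^sub>R (x * exp (u *\<^sub>R x))) \<le> norm x" for u
  proof -
    have "onorm (\<lambda>h::real. h *\<^sub>R (x * exp (u *\<^sub>R x))) = onorm (\<lambda>h::real. h) * norm (x * exp (u *\<^sub>R x))"
      by (rule onorm_scaleR_left) (rule bounded_linear_ident)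
    also have "\<dots> = norm (x * exp (u *\<^sub>R x))" by (simp add: onorm_id)
    also have "\<dots> \<le> norm x * norm (exp (u *\<^sub>R x))" by (rule norm_mult_ineq)
    also have "\<dots> \<le> norm x * 1" by (intro mult_left_mono skew_exp_norm assms) simp
    finally show ?thesis by simp
  qed
  have "norm (?f s - ?f 0) \<le> norm x * norm (s - 0)"
    by (rule differentiable_bound[of UNIV, OF _ d b]) simp_all
  then show ?thesis by (simp add: mult.commute)
qed

lemma norm_mult3:
  fixes a b c :: "'a::real_normed_algebra"
  shows "norm (a * b * c) \<le> norm a * norm b * norm c"
proof -
  have "norm (a * b * c) \<le> norm (a * b) * norm c" by (rule norm_mult_ineq)
  also have "\<dots> \<le> norm a * norm b * norm c"
    by (intro mult_right_mono norm_mult_ineq norm_ge_zero)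
  finally show ?thesis .
qed

lemma skew_conj_norm:
  fixes x c :: "'n::finite cop"
  assumes "skew x"
  shows "norm (exp (s *\<^sub>R x) * c * exp ((- s) *\<^sub>R x)) \<le> norm c"
proof -
  have "norm (exp (s *\<^sub>R x) * c * exp ((- s) *\<^sub>R x)) \<le> norm (exp (s *\<^sub>R x)) * norm c * norm (exp ((- s) *\<^sub>R x))"
    by (rule norm_mult3)
  also have "\<dots> \<le> 1 * norm c * 1"
    by (intro mult_mono skew_exp_norm assms) simp_all
  finally show ?thesis by simp
qed

lemma skew_conj_diff:
  fixes x c :: "'n::finite cop"
  assumes "skew x"
  shows "norm (exp (s *\<^sub>R x) * c * exp ((- s) *\<^sub>R x) - c) \<le> 2 * \<bar>s\<bar> * norm x * norm c"
proof -
  let ?U = "exp (s *\<^sub>R x)" and ?V = "exp ((- s) *\<^sub>R x)"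
  have eq: "?U * c * ?V - c = (?U - 1) * c * ?V + c * (?V - 1)"
    by (simp add: algebra_simps)
  have n1: "norm ((?U - 1) * c * ?V) \<le> \<bar>s\<bar> * norm x * norm c"
  proof -
    have "norm ((?U - 1) * c * ?V) \<le> norm (?U - 1) * norm c * norm ?V"
      by (rule norm_mult3)
    also have "\<dots> \<le> (\<bar>s\<bar> * norm x) * norm c * 1"
      by (intro mult_mono skew_exp_diff skew_exp_norm assms) simp_all
    finally show ?thesis by simp
  qed
  have n2: "norm (c * (?V - 1)) \<le> \<bar>s\<bar> * norm x * norm c"
  proof -
    have "norm (c * (?V - 1)) \<le> norm c * norm (?V - 1)" by (rule norm_mult_ineq)
    also have "\<dots> \<le> norm c * (\<bar>- s\<bar> * norm x)"
      by (intro mult_left_mono skew_exp_diff assms) simp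
    finally show ?thesis by (simp add: mult_ac)
  qed
  show ?thesis unfolding eq
    using norm_triangle_ineq[of "(?U - 1) * c * ?V" "c * (?V - 1)"] n1 n2 by linarith
qed


lemma mat_commute: "mat (c::complex) ** M = M ** mat c"
  by (simp add: vec_eq_iff matrix_matrix_mult_def mat_def if_distrib[of "\<lambda>x. x * _"]
      if_distrib[of "\<lambda>x. _ * x"] cong: if_cong)

lemma cscale_mat: "cscale c M = mat c ** M"
  by (simp add: vec_eq_iff cscale_def matrix_matrix_mult_def mat_def if_distrib[of "\<lambda>x. x * _"] cong: if_cong)

lemma cscale_scaleR_i: "cscale (\<i> * of_real t) M = t *\<^sub>R cscale \<i> M"
  by (simp add: vec_eq_iff cscale_def) (simp add: scaleR_conv_of_real mult_ac)

lemma cscale_scaleR_mi: "cscale (- \<i> * of_real t) M = (- t) *\<^sub>R cscale \<i> M"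
  by (simp add: vec_eq_iff cscale_def) (simp add: scaleR_conv_of_real mult_ac)

lemma mat_i_apply: "(mat (c::complex) *v v) $ i = c * v $ i"
  by (simp add: matrix_vector_mult_def mat_def if_distrib[of "\<lambda>x. x * _"] cong: if_cong)

lemma norm_mat_i: "norm (mop (mat \<i>) :: 'n::finite cop) \<le> 1"
proof -
  have "norm (mat \<i> *v v) = norm v" for v :: "complex^'n"
    by (simp add: norm_vec_def mat_i_apply norm_mult)
  then show ?thesis unfolding norm_cop_bl by (intro norm_blinfun_bound) simp_all
qed

definition J :: "complex^'n^'n \<Rightarrow> 'n::finite cop" where
  "J M = mop (cscale \<i> M)"

lemma J_eq: "J M = mop (mat \<i>) * mop M"
  by (simp add: J_def cscale_mat mop_mult)

lemma J_sum: "J (sum f S) = (\<Sum>x\<in>S. J (f x))"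
  by (simp add: J_eq mop_sum sum_distrib_left)

lemma J_norm: "norm (J (M::complex^'n::finite^'n)) \<le> opnorm M"
proof -
  have "norm (J M) \<le> norm (mop (mat \<i>) :: 'n cop) * norm (mop M)"
    unfolding J_eq by (rule norm_mult_ineq)
  also have "\<dots> \<le> 1 * norm (mop M)"
    by (intro mult_right_mono norm_mat_i) simp
  finally show ?thesis by (simp add: opnorm_mop)
qed

lemma mop_i_commute: "mop (mat \<i>) * mop M = mop M * mop (mat \<i>)"
  by (simp add: mop_mult[symmetric] mat_commute)

lemma J_commute:
  assumes "M ** N = N ** M"
  shows "J M * J N = J N * J M"
proof -
  have "J M * J N = mop (mat \<i>) * mop (mat \<i>) * (mop M * mop N)"
    unfolding J_eq by (metis mop_i_commute mult.assoc)
  also have "\<dots> = mop (mat \<i>) * mop (mat \<i>) * (mop N * mop M)"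
    by (simp add: mop_mult[symmetric] assms)
  also have "\<dots> = J N * J M"
    unfolding J_eq by (metis mop_i_commute mult.assoc)
  finally show ?thesis .
qed

lemma J_commute_mop:
  assumes "M ** A = A ** M"
  shows "J M * mop A = mop A * J M"
proof -
  have "J M * mop A = mop (mat \<i>) * (mop M * mop A)" unfolding J_eq by (simp add: mult.assoc)
  also have "\<dots> = mop (mat \<i>) * (mop A * mop M)" by (simp add: mop_mult[symmetric] assms)
  also have "\<dots> = mop A * J M" unfolding J_eq by (metis mop_i_commute mult.assoc)
  finally show ?thesis .
qed

lemma inner_cvec: "inner (x::complex^'n) y = Re (\<Sum>i\<in>UNIV. x $ i * cnj (y $ i))"
  by (simp add: inner_vec_def inner_complex_def Re_sum)

lemma skew_J:
  fixes K :: "complex^'n::finite^'n"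
  assumes "self_adjoint K"
  shows "skew (J K)"
  unfolding skew_def
proof
  fix v :: "complex^'n"
  have K: "cnj (K $ i $ j) = K $ j $ i" for i j
    using assms unfolding self_adjoint_def cadj_def vec_eq_iff
    by (metis complex_cnj_cnj vec_lambda_beta)
  define S where "S = (\<Sum>i\<in>UNIV. \<Sum>j\<in>UNIV. K $ i $ j * v $ j * cnj (v $ i))"
  have "cnj S = (\<Sum>i\<in>UNIV. \<Sum>j\<in>UNIV. K $ j $ i * cnj (v $ j) * v $ i)"
    by (simp add: S_def K)
  also have "\<dots> = S" unfolding S_def
    by (subst sum.swap) (simp add: mult_ac)
  finally have "Im S = 0" by (metis Reals_cnj_iff complex_is_Real_iff)
  have "inner (blinfun_apply (bl_of (J K)) v) v = Re (\<i> * S)"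
    by (simp add: J_def inner_cvec cscale_def matrix_vector_mult_def S_def
        sum_distrib_left sum_distrib_right mult_ac)
  also have "\<dots> = 0" using \<open>Im S = 0\<close> by simp
  finally show "inner (blinfun_apply (bl_of (J K)) v) v = 0" .
qed




section \<open>Local algebras\<close>

lemma embed_entry: "embed Z a $ \<sigma> $ \<tau> = (if (\<forall>x. x \<notin> Z \<longrightarrow> \<sigma> x = \<tau> x) then a (restr Z \<sigma>) (restr Z \<tau>) else 0)"
  by (simp add: embed_def)

lemma embed_mult_disjoint:
  fixes a b :: "('a::finite \<Rightarrow> 'q::finite) \<Rightarrow> ('a \<Rightarrow> 'q) \<Rightarrow> complex"
  assumes "Z \<inter> X = {}"
  shows "embed Z a ** embed X b = (\<chi> \<sigma> \<tau>. if (\<forall>x. x \<notin> Z \<union> X \<longrightarrow> \<sigma> x = \<tau> x)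
           then a (restr Z \<sigma>) (restr Z \<tau>) * b (restr X \<sigma>) (restr X \<tau>) else 0)"
proof -
  have "(\<Sum>\<rho>\<in>UNIV. embed Z a $ \<sigma> $ \<rho> * embed X b $ \<rho> $ \<tau>) =
     (if (\<forall>x. x \<notin> Z \<union> X \<longrightarrow> \<sigma> x = \<tau> x)
           then a (restr Z \<sigma>) (restr Z \<tau>) * b (restr X \<sigma>) (restr X \<tau>) else 0)" for \<sigma> \<tau>
  proof -
    define \<rho>0 where "\<rho>0 = (\<lambda>x. if x \<in> Z then \<tau> x else \<sigma> x)"
    have "embed Z a $ \<sigma> $ \<rho> * embed X b $ \<rho> $ \<tau> =
      (if \<rho> = \<rho>0 then (if (\<forall>x. x \<notin> Z \<union> X \<longrightarrow> \<sigma> x = \<tau> x)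
           then a (restr Z \<sigma>) (restr Z \<tau>) * b (restr X \<sigma>) (restr X \<tau>) else 0) else 0)" for \<rho>
    proof (cases "\<rho> = \<rho>0")
      case True
      have r1: "restr Z \<rho>0 = restr Z \<tau>" by (auto simp: restr_def \<rho>0_def)
      have r2: "restr X \<rho>0 = restr X \<sigma>" using assms by (auto simp: restr_def \<rho>0_def fun_eq_iff)
      have c1: "\<forall>x. x \<notin> Z \<longrightarrow> \<sigma> x = \<rho>0 x" by (simp add: \<rho>0_def)
      have c2: "(\<forall>x. x \<notin> X \<longrightarrow> \<rho>0 x = \<tau> x) = (\<forall>x. x \<notin> Z \<union> X \<longrightarrow> \<sigma> x = \<tau> x)"
        using assms by (auto simp: \<rho>0_def)
      have e1: "embed Z a $ \<sigma> $ \<rho> = a (restr Z \<sigma>) (restr Z \<tau>)"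
        using True c1 r1 by (simp add: embed_entry)
      have e2: "embed X b $ \<rho> $ \<tau> = (if (\<forall>x. x \<notin> Z \<union> X \<longrightarrow> \<sigma> x = \<tau> x) then b (restr X \<sigma>) (restr X \<tau>) else 0)"
        unfolding True embed_entry by (simp only: c2 r2)
      show ?thesis using True e1 e2 by auto
    next
      case False
      have "\<not> ((\<forall>x. x \<notin> Z \<longrightarrow> \<sigma> x = \<rho> x) \<and> (\<forall>x. x \<notin> X \<longrightarrow> \<rho> x = \<tau> x))"
      proof
        assume h: "(\<forall>x. x \<notin> Z \<longrightarrow> \<sigma> x = \<rho> x) \<and> (\<forall>x. x \<notin> X \<longrightarrow> \<rho> x = \<tau> x)"
        have "\<rho> = \<rho>0"
        proof
          fix x show "\<rho> x = \<rho>0 x"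
            using h assms by (cases "x \<in> Z") (auto simp: \<rho>0_def)
        qed
        with False show False by simp
      qed
      then show ?thesis using False by (auto simp: embed_entry)
    qed
    then show ?thesis by (simp add: sum.delta')
  qed
  then show ?thesis by (simp add: vec_eq_iff matrix_matrix_mult_def)
qed

lemma local_alg_commute:
  assumes "Z \<inter> X = {}" "A \<in> local_alg Z" "B \<in> local_alg X"
  shows "A ** B = B ** A"
proof -
  obtain a b where A: "A = embed Z a" and B: "B = embed X b"
    using assms by (auto simp: local_alg_def)
  have "X \<inter> Z = {}" using assms by blast
  then show ?thesis unfolding A B embed_mult_disjoint[OF assms(1)] embed_mult_disjoint[OF \<open>X \<inter> Z = {}\<close>]
    by (auto simp: Un_commute mult.commute vec_eq_iff)
qed

definition join :: "'a set \<Rightarrow> ('a \<Rightarrow> 'q) \<Rightarrow> ('a \<Rightarrow> 'q) \<Rightarrow> ('a \<Rightarrow> 'q)" where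
  "join S \<sigma> \<rho> = (\<lambda>x. if x \<in> S then \<sigma> x else \<rho> x)"

lemma embed_mult_same:
  fixes a b :: "('a::finite \<Rightarrow> 'q::finite) \<Rightarrow> ('a \<Rightarrow> 'q) \<Rightarrow> complex"
  shows "embed S a ** embed S b = embed S (\<lambda>\<mu> \<nu>. \<Sum>\<kappa>\<in>configs_on S. a \<mu> \<kappa> * b \<kappa> \<nu>)"
proof -
  have "(\<Sum>\<rho>\<in>UNIV. embed S a $ \<sigma> $ \<rho> * embed S b $ \<rho> $ \<tau>) = embed S (\<lambda>\<mu> \<nu>. \<Sum>\<kappa>\<in>configs_on S. a \<mu> \<kappa> * b \<kappa> \<nu>) $ \<sigma> $ \<tau>"
    for \<sigma> \<tau>
  proof (cases "\<forall>x. x \<notin> S \<longrightarrow> \<sigma> x = \<tau> x")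
    case True
    let ?R = "{\<rho>. \<forall>x. x \<notin> S \<longrightarrow> \<sigma> x = \<rho> x}"
    have "(\<Sum>\<rho>\<in>UNIV. embed S a $ \<sigma> $ \<rho> * embed S b $ \<rho> $ \<tau>) =
          (\<Sum>\<rho>\<in>UNIV. if \<rho> \<in> ?R then a (restr S \<sigma>) (restr S \<rho>) * b (restr S \<rho>) (restr S \<tau>) else 0)"
      using True by (intro sum.cong) (auto simp: embed_entry)
    also have "\<dots> = (\<Sum>\<rho>\<in>?R. a (restr S \<sigma>) (restr S \<rho>) * b (restr S \<rho>) (restr S \<tau>))"
      by (simp add: sum.If_cases)
    also have "\<dots> = (\<Sum>\<kappa>\<in>configs_on S. a (restr S \<sigma>) \<kappa> * b \<kappa> (restr S \<tau>))"
      by (rule sum.reindex_bij_witness[where i = "\<lambda>\<kappa>. join S \<kappa> \<sigma>" and j = "restr S"])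
        (auto simp: configs_on_def restr_def join_def)
    finally show ?thesis using True by (simp add: embed_entry)
  next
    case False
    have "embed S a $ \<sigma> $ \<rho> * embed S b $ \<rho> $ \<tau> = 0" for \<rho>
      using False by (auto simp: embed_entry)
    then have l: "(\<Sum>\<rho>\<in>UNIV. embed S a $ \<sigma> $ \<rho> * embed S b $ \<rho> $ \<tau>) = 0"
      by (intro sum.neutral) blast
    have r: "embed S (\<lambda>\<mu> \<nu>. \<Sum>\<kappa>\<in>configs_on S. a \<mu> \<kappa> * b \<kappa> \<nu>) $ \<sigma> $ \<tau> = 0"
      using False by (auto simp: embed_entry)
    show ?thesis by (simp only: l r)
  qed
  then show ?thesis by (simp add: vec_eq_iff matrix_matrix_mult_def)
qed

lemma local_alg_mult: "A \<in> local_alg S \<Longrightarrow> B \<in> local_alg S \<Longrightarrow> A ** B \<in> local_alg S"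
  by (auto simp: local_alg_def embed_mult_same)

lemma local_alg_one: "(mat 1 :: ('a::finite,'q::finite) obs) \<in> local_alg S"
proof -
  have "(mat 1 :: ('a,'q) obs) = embed S (\<lambda>\<mu> \<nu>. if \<mu> = \<nu> then 1 else 0)"
  proof -
    have eq: "(\<sigma> = \<tau>) = ((\<forall>x. x \<notin> S \<longrightarrow> \<sigma> x = \<tau> x) \<and> restr S \<sigma> = restr S \<tau>)" for \<sigma> \<tau> :: "'a \<Rightarrow> 'q"
      by (auto simp: restr_def fun_eq_iff)
    have "(mat 1 :: ('a,'q) obs) $ \<sigma> $ \<tau> = embed S (\<lambda>\<mu> \<nu>. if \<mu> = \<nu> then 1 else 0) $ \<sigma> $ \<tau>" for \<sigma> \<tau>
      using eq[of \<sigma> \<tau>] by (auto simp: embed_entry mat_def)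
    then show ?thesis by (simp add: vec_eq_iff)
  qed
  then show ?thesis by (simp add: local_alg_def)
qed

lemma local_alg_subspace: "subspace (local_alg S :: ('a::finite,'q::finite) obs set)"
  unfolding subspace_def
proof (intro conjI ballI allI)
  show "0 \<in> local_alg S"
    by (auto simp: local_alg_def vec_eq_iff embed_entry intro!: image_eqI[where x = "\<lambda>_ _. 0"])
  fix A B :: "('a,'q) obs" assume "A \<in> local_alg S" "B \<in> local_alg S"
  then obtain a b where "A = embed S a" "B = embed S b" by (auto simp: local_alg_def)
  then show "A + B \<in> local_alg S"
    by (auto simp: local_alg_def vec_eq_iff embed_entry intro!: image_eqI[where x = "\<lambda>x y. a x y + b x y"])
next
  fix c :: real and A :: "('a,'q) obs" assume "A \<in> local_alg S"
  then obtain a where "A = embed S a" by (auto simp: local_alg_def)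
  then show "c *\<^sub>R A \<in> local_alg S"
    by (auto simp: local_alg_def vec_eq_iff embed_entry intro!: image_eqI[where x = "\<lambda>x y. c *\<^sub>R a x y"])
qed

lemma local_alg_closed: "closed (local_alg S)"
  by (rule closed_subspace[OF local_alg_subspace])

lemma local_alg_mono:
  assumes "Z \<subseteq> S"
  shows "(local_alg Z :: ('a::finite,'q::finite) obs set) \<subseteq> local_alg S"
proof
  fix A :: "('a,'q) obs" assume "A \<in> local_alg Z"
  then obtain a where A: "A = embed Z a" by (auto simp: local_alg_def)
  have "embed Z a = embed S (\<lambda>\<mu> \<nu>. if (\<forall>x. x \<notin> Z \<longrightarrow> \<mu> x = \<nu> x) then a (restr Z \<mu>) (restr Z \<nu>) else 0)"
  proof -
    have rr: "restr Z (restr S \<sigma>) = restr Z \<sigma>" for \<sigma> :: "'a \<Rightarrow> 'q"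
      using assms by (auto simp: restr_def fun_eq_iff)
    have eq: "(\<forall>x. x \<notin> Z \<longrightarrow> \<sigma> x = \<tau> x) =
      ((\<forall>x. x \<notin> S \<longrightarrow> \<sigma> x = \<tau> x) \<and> (\<forall>x. x \<notin> Z \<longrightarrow> restr S \<sigma> x = restr S \<tau> x))" for \<sigma> \<tau> :: "'a \<Rightarrow> 'q"
      using assms by (auto simp: restr_def)
    have "embed Z a $ \<sigma> $ \<tau> = embed S (\<lambda>\<mu> \<nu>. if (\<forall>x. x \<notin> Z \<longrightarrow> \<mu> x = \<nu> x) then a (restr Z \<mu>) (restr Z \<nu>) else 0) $ \<sigma> $ \<tau>" for \<sigma> \<tau>
      unfolding embed_entry rr using eq[of \<sigma> \<tau>] by auto
    then show ?thesis by (simp add: vec_eq_iff)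
  qed
  then show "A \<in> local_alg S" by (simp add: A local_alg_def)
qed

lemma local_alg_sum: "(\<And>x. x \<in> T \<Longrightarrow> f x \<in> local_alg S) \<Longrightarrow> sum f T \<in> local_alg S"
  by (rule subspace_sum[OF local_alg_subspace])

lemma local_alg_mpow: "M \<in> local_alg S \<Longrightarrow> mpow M k \<in> local_alg S"
  by (induction k) (simp_all add: local_alg_one local_alg_mult)

lemma local_alg_mexp:
  assumes "M \<in> local_alg S"
  shows "mexp M \<in> local_alg S"
proof -
  define f where "f = (\<lambda>n. \<Sum>k<n. (1 / fact k) *\<^sub>R mpow M k)"
  have lim: "f \<longlonglongrightarrow> mexp M"
    unfolding mexp_def f_def by (rule summable_LIMSEQ[OF mexp_summable])
  have mem: "f n \<in> local_alg S" for n
  proof -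
    show "f n \<in> local_alg S"
      unfolding f_def
    proof (rule local_alg_sum)
      fix k show "(1 / fact k) *\<^sub>R mpow M k \<in> local_alg S"
        by (rule subspace_scale[OF local_alg_subspace local_alg_mpow[OF assms]])
    qed
  qed
  show ?thesis by (rule closed_sequentially[OF local_alg_closed mem lim])
qed

lemma embed_cscale: "cscale c (embed S a) = embed S (\<lambda>x y. c * a x y)"
  by (auto simp: vec_eq_iff embed_entry cscale_def)

lemma local_alg_cscale: "M \<in> local_alg S \<Longrightarrow> cscale c M \<in> local_alg S"
  by (auto simp: local_alg_def embed_cscale)




section \<open>Conditional expectation\<close>

definition agree :: "'a set \<Rightarrow> ('a \<Rightarrow> 'q) \<Rightarrow> ('a \<Rightarrow> 'q) \<Rightarrow> bool" where
  "agree S \<sigma> \<tau> \<longleftrightarrow> (\<forall>x. x \<notin> S \<longrightarrow> \<sigma> x = \<tau> x)"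

lemma configs_finite: "finite (configs_on Z :: ('a::finite \<Rightarrow> 'q::finite) set)"
  by (rule finite_subset[OF subset_UNIV]) simp

lemma configs_nonempty: "(\<lambda>_. undefined) \<in> configs_on Z"
  by (simp add: configs_on_def)

lemma card_configs_pos: "card (configs_on Z :: ('a::finite \<Rightarrow> 'q::finite) set) > 0"
  using configs_finite configs_nonempty by (metis card_gt_0_iff empty_iff)

lemma cond_exp_entry:
  "cond_exp S (D :: ('a::finite,'q::finite) obs) $ \<sigma> $ \<tau> = (if agree S \<sigma> \<tau> then
     (\<Sum>\<rho>\<in>configs_on (- S). D $ join S \<sigma> \<rho> $ join S \<tau> \<rho>) / of_nat (card (configs_on (- S) :: ('a::finite \<Rightarrow> 'q::finite) set)) else 0)"
proof -
  have j: "D $ (\<lambda>x. if x \<in> S then restr S \<sigma> x else \<rho> x) $ (\<lambda>x. if x \<in> S then restr S \<tau> x else \<rho> x)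
     = D $ join S \<sigma> \<rho> $ join S \<tau> \<rho>" for \<rho>
  proof -
    have "(\<lambda>x. if x \<in> S then restr S \<sigma> x else \<rho> x) = join S \<sigma> \<rho>"
         "(\<lambda>x. if x \<in> S then restr S \<tau> x else \<rho> x) = join S \<tau> \<rho>"
      by (auto simp: restr_def join_def)
    then show ?thesis by simp
  qed
  show ?thesis unfolding cond_exp_def embed_entry j agree_def by auto
qed

lemma join_restr: "restr S (join S \<sigma> \<rho>) = restr S \<sigma>"
  by (auto simp: restr_def join_def)

lemma agree_join: "agree S (join S \<sigma> \<rho>) (join S \<tau> \<rho>)"
  by (simp add: agree_def join_def)

lemma embed_entry_agree: "embed Z a $ \<sigma> $ \<tau> = (if agree Z \<sigma> \<tau> then a (restr Z \<sigma>) (restr Z \<tau>) else 0)"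
  by (simp add: embed_entry agree_def)

lemma cond_exp_local:
  fixes M :: "('a::finite,'q::finite) obs"
  assumes "M \<in> local_alg S"
  shows "cond_exp S M = M"
proof -
  obtain a where M: "M = embed S a" using assms by (auto simp: local_alg_def)
  let ?N = "card (configs_on (- S) :: ('a \<Rightarrow> 'q) set)"
  have "cond_exp S M $ \<sigma> $ \<tau> = M $ \<sigma> $ \<tau>" for \<sigma> \<tau>
  proof (cases "agree S \<sigma> \<tau>")
    case True
    have "(\<Sum>\<rho>\<in>configs_on (- S). M $ join S \<sigma> \<rho> $ join S \<tau> \<rho>) = (\<Sum>\<rho>\<in>(configs_on (- S) :: ('a \<Rightarrow> 'q) set). a (restr S \<sigma>) (restr S \<tau>))"
      by (rule sum.cong[OF refl]) (simp add: M embed_entry_agree join_restr agree_join)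
    also have "\<dots> = of_nat ?N * a (restr S \<sigma>) (restr S \<tau>)" by simp
    finally show ?thesis using True card_configs_pos[of "- S"] configs_nonempty[of "- S"]
      by (auto simp: cond_exp_entry M embed_entry_agree)
  next
    case False
    then show ?thesis by (simp add: cond_exp_entry M embed_entry_agree)
  qed
  then show ?thesis by (simp add: vec_eq_iff)
qed

lemma cond_exp_diff: "cond_exp S (M - N) = cond_exp S M - cond_exp S (N :: ('a::finite,'q::finite) obs)"
  by (simp add: vec_eq_iff cond_exp_entry sum_subtractf diff_divide_distrib)


lemma sum_if_UNIV:
  fixes f :: "'b::finite \<Rightarrow> 'c::comm_monoid_add"
  shows "(\<Sum>x\<in>UNIV. if P x then f x else 0) = (\<Sum>x\<in>{x. P x}. f x)"
  by (simp add: sum.If_cases)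

lemma unique_gamma:
  fixes S :: "'a::finite set" and \<sigma> \<tau> :: "'a \<Rightarrow> 'q::finite" and F :: "'c::comm_monoid_add"
  shows "(\<Sum>\<gamma>\<in>configs_on (- S). if agree S \<sigma> \<gamma> \<and> agree S \<tau> \<gamma> then F else 0) = (if agree S \<sigma> \<tau> then F else 0)"
proof -
  have eq: "(agree S \<sigma> \<gamma> \<and> agree S \<tau> \<gamma>) = (\<gamma> = restr (- S) \<sigma> \<and> agree S \<sigma> \<tau>)"
    if "\<gamma> \<in> configs_on (- S)" for \<gamma>
    using that unfolding agree_def configs_on_def restr_def by (auto simp: fun_eq_iff)
  have "(\<Sum>\<gamma>\<in>configs_on (- S). if agree S \<sigma> \<gamma> \<and> agree S \<tau> \<gamma> then F else 0) =
        (\<Sum>\<gamma>\<in>configs_on (- S). if \<gamma> = restr (- S) \<sigma> then (if agree S \<sigma> \<tau> then F else 0) else 0)"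
    by (rule sum.cong[OF refl]) (simp add: eq)
  also have "\<dots> = (if agree S \<sigma> \<tau> then F else 0)"
    by (simp add: configs_on_def restr_def)
  finally show ?thesis .
qed

lemma join_join: "agree S \<kappa> \<rho> \<Longrightarrow> join S (join S \<kappa> \<gamma>) \<rho> = \<kappa>"
  by (auto simp: agree_def join_def fun_eq_iff)

lemma agree_join_left: "agree S (join S \<sigma> \<rho>) \<rho>"
  by (simp add: agree_def join_def)

lemma slice_reindex:
  "(\<Sum>\<sigma>\<in>{\<sigma>. agree S \<sigma> \<gamma>}. f \<sigma>) = (\<Sum>\<kappa>\<in>{\<kappa>. agree S \<kappa> \<rho>}. f (join S \<kappa> \<gamma>))"
  by (rule sum.reindex_bij_witness[where i="\<lambda>\<kappa>. join S \<kappa> \<gamma>" and j="\<lambda>\<sigma>. join S \<sigma> \<rho>"])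
     (auto simp: join_join agree_join_left)

definition vblk :: "'a set \<Rightarrow> complex^('a::finite \<Rightarrow> 'q::finite) \<Rightarrow> ('a \<Rightarrow> 'q) \<Rightarrow> ('a \<Rightarrow> 'q) \<Rightarrow> complex^('a \<Rightarrow> 'q)" where
  "vblk S v \<gamma> \<rho> = (\<chi> \<kappa>. if agree S \<kappa> \<rho> then v $ join S \<kappa> \<gamma> else 0)"

definition vslice :: "'a set \<Rightarrow> complex^('a::finite \<Rightarrow> 'q::finite) \<Rightarrow> ('a \<Rightarrow> 'q) \<Rightarrow> complex^('a \<Rightarrow> 'q)" where
  "vslice S v \<gamma> = (\<chi> \<sigma>. if agree S \<sigma> \<gamma> then v $ \<sigma> else 0)"

lemma norm_sq_vec: "(norm (x::complex^'n::finite))\<^sup>2 = (\<Sum>i\<in>UNIV. (norm (x$i))\<^sup>2)"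
  by (simp add: norm_vec_def L2_set_def sum_nonneg)

lemma norm_vblk:
  fixes v :: "complex^('a::finite \<Rightarrow> 'q::finite)"
  shows "norm (vblk S v \<gamma> \<rho>) = norm (vslice S v \<gamma>)"
proof -
  have "(norm (vblk S v \<gamma> \<rho>))\<^sup>2 = (\<Sum>\<kappa>\<in>UNIV. if agree S \<kappa> \<rho> then (norm (v $ join S \<kappa> \<gamma>))\<^sup>2 else 0)"
    unfolding norm_sq_vec by (rule sum.cong[OF refl]) (simp add: vblk_def)
  also have "\<dots> = (\<Sum>\<kappa>\<in>{\<kappa>. agree S \<kappa> \<rho>}. (norm (v $ join S \<kappa> \<gamma>))\<^sup>2)"
    by (rule sum_if_UNIV)
  also have "\<dots> = (\<Sum>\<sigma>\<in>{\<sigma>. agree S \<sigma> \<gamma>}. (norm (v $ \<sigma>))\<^sup>2)"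
    by (rule slice_reindex[symmetric])
  also have "\<dots> = (\<Sum>\<sigma>\<in>UNIV. if agree S \<sigma> \<gamma> then (norm (v $ \<sigma>))\<^sup>2 else 0)"
    by (rule sum_if_UNIV[symmetric])
  also have "\<dots> = (norm (vslice S v \<gamma>))\<^sup>2"
    unfolding norm_sq_vec by (rule sum.cong[OF refl]) (simp add: vslice_def)
  finally show ?thesis by (simp add: power2_eq_iff_nonneg)
qed

lemma sum_slices:
  fixes v :: "complex^('a::finite \<Rightarrow> 'q::finite)"
  shows "(\<Sum>\<gamma>\<in>configs_on (- S). (norm (vslice S v \<gamma>))\<^sup>2) = (norm v)\<^sup>2"
proof -
  have "(\<Sum>\<gamma>\<in>configs_on (- S). (norm (vslice S v \<gamma>))\<^sup>2) =
        (\<Sum>\<gamma>\<in>configs_on (- S). \<Sum>\<sigma>\<in>UNIV. if agree S \<sigma> \<gamma> \<and> agree S \<sigma> \<gamma> then (norm (v $ \<sigma>))\<^sup>2 else 0)"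
    unfolding norm_sq_vec by (intro sum.cong refl) (simp add: vslice_def)
  also have "\<dots> = (\<Sum>\<sigma>\<in>UNIV. \<Sum>\<gamma>\<in>configs_on (- S). if agree S \<sigma> \<gamma> \<and> agree S \<sigma> \<gamma> then (norm (v $ \<sigma>))\<^sup>2 else 0)"
    by (rule sum.swap)
  also have "\<dots> = (\<Sum>\<sigma>\<in>UNIV. (norm (v $ \<sigma>))\<^sup>2)"
    by (rule sum.cong[OF refl]) (simp only: unique_gamma, simp add: agree_def)
  finally show ?thesis by (simp add: norm_sq_vec)
qed


lemma double_if:
  fixes g :: "'b::finite \<Rightarrow> 'd::finite \<Rightarrow> 'c::comm_monoid_add"
  shows "(\<Sum>\<sigma>\<in>UNIV. \<Sum>\<tau>\<in>UNIV. if P \<sigma> \<and> Q \<tau> then g \<sigma> \<tau> else 0) = (\<Sum>\<sigma>\<in>{\<sigma>. P \<sigma>}. \<Sum>\<tau>\<in>{\<tau>. Q \<tau>}. g \<sigma> \<tau>)"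
proof -
  have "(\<Sum>\<tau>\<in>UNIV. if P \<sigma> \<and> Q \<tau> then g \<sigma> \<tau> else 0) = (if P \<sigma> then (\<Sum>\<tau>\<in>{\<tau>. Q \<tau>}. g \<sigma> \<tau>) else 0)" for \<sigma>
    by (cases "P \<sigma>") (simp_all add: sum_if_UNIV)
  then show ?thesis by (simp add: sum_if_UNIV)
qed

lemma block_inner:
  fixes D :: "('a::finite,'q::finite) obs" and u v :: "complex^('a \<Rightarrow> 'q)"
  shows "(\<Sum>\<sigma>\<in>UNIV. \<Sum>\<tau>\<in>UNIV. if agree S \<sigma> \<gamma> \<and> agree S \<tau> \<gamma> then D $ join S \<sigma> \<rho> $ join S \<tau> \<rho> * v $ \<tau> * cnj (u $ \<sigma>) else 0)
    = (\<Sum>\<kappa>\<in>UNIV. (D *v vblk S v \<gamma> \<rho>) $ \<kappa> * cnj (vblk S u \<gamma> \<rho> $ \<kappa>))"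
proof -
  let ?T = "\<Sum>\<kappa>\<in>{\<kappa>. agree S \<kappa> \<rho>}. \<Sum>\<mu>\<in>{\<mu>. agree S \<mu> \<rho>}. D $ \<kappa> $ \<mu> * v $ join S \<mu> \<gamma> * cnj (u $ join S \<kappa> \<gamma>)"
  have "(\<Sum>\<sigma>\<in>UNIV. \<Sum>\<tau>\<in>UNIV. if agree S \<sigma> \<gamma> \<and> agree S \<tau> \<gamma> then D $ join S \<sigma> \<rho> $ join S \<tau> \<rho> * v $ \<tau> * cnj (u $ \<sigma>) else 0)
     = (\<Sum>\<sigma>\<in>{\<sigma>. agree S \<sigma> \<gamma>}. \<Sum>\<tau>\<in>{\<tau>. agree S \<tau> \<gamma>}. D $ join S \<sigma> \<rho> $ join S \<tau> \<rho> * v $ \<tau> * cnj (u $ \<sigma>))"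
    by (rule double_if)
  also have "\<dots> = (\<Sum>\<kappa>\<in>{\<kappa>. agree S \<kappa> \<rho>}. \<Sum>\<tau>\<in>{\<tau>. agree S \<tau> \<gamma>}. D $ join S (join S \<kappa> \<gamma>) \<rho> $ join S \<tau> \<rho> * v $ \<tau> * cnj (u $ join S \<kappa> \<gamma>))"
    by (rule slice_reindex)
  also have "\<dots> = (\<Sum>\<kappa>\<in>{\<kappa>. agree S \<kappa> \<rho>}. \<Sum>\<mu>\<in>{\<mu>. agree S \<mu> \<rho>}. D $ join S (join S \<kappa> \<gamma>) \<rho> $ join S (join S \<mu> \<gamma>) \<rho> * v $ join S \<mu> \<gamma> * cnj (u $ join S \<kappa> \<gamma>))"
    by (rule sum.cong[OF refl]) (rule slice_reindex)
  also have "\<dots> = ?T"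
    by (intro sum.cong refl) (simp add: join_join)
  finally have l: "(\<Sum>\<sigma>\<in>UNIV. \<Sum>\<tau>\<in>UNIV. if agree S \<sigma> \<gamma> \<and> agree S \<tau> \<gamma> then D $ join S \<sigma> \<rho> $ join S \<tau> \<rho> * v $ \<tau> * cnj (u $ \<sigma>) else 0) = ?T" .
  have "(\<Sum>\<kappa>\<in>UNIV. (D *v vblk S v \<gamma> \<rho>) $ \<kappa> * cnj (vblk S u \<gamma> \<rho> $ \<kappa>))
     = (\<Sum>\<kappa>\<in>UNIV. \<Sum>\<mu>\<in>UNIV. if agree S \<kappa> \<rho> \<and> agree S \<mu> \<rho> then D $ \<kappa> $ \<mu> * v $ join S \<mu> \<gamma> * cnj (u $ join S \<kappa> \<gamma>) else 0)"
    by (intro sum.cong refl) (auto simp: matrix_vector_mult_def vblk_def sum_distrib_right intro!: sum.cong)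
  also have "\<dots> = ?T" by (rule double_if)
  finally show ?thesis using l by simp
qed


lemma cond_exp_bilinear:
  fixes D :: "('a::finite,'q::finite) obs" and u v :: "complex^('a \<Rightarrow> 'q)" and S :: "'a set"
  defines "R \<equiv> (configs_on (- S) :: ('a \<Rightarrow> 'q) set)"
  shows "(\<Sum>\<sigma>\<in>UNIV. (cond_exp S D *v v) $ \<sigma> * cnj (u $ \<sigma>)) =
    (\<Sum>\<rho>\<in>R. \<Sum>\<gamma>\<in>R. \<Sum>\<kappa>\<in>UNIV. (D *v vblk S v \<gamma> \<rho>) $ \<kappa> * cnj (vblk S u \<gamma> \<rho> $ \<kappa>)) / of_nat (card R)"
proof -
  let ?N = "of_nat (card R) :: complex"
  let ?H = "\<lambda>\<sigma> \<tau> \<rho>. if agree S \<sigma> \<tau> then D $ join S \<sigma> \<rho> $ join S \<tau> \<rho> * v $ \<tau> * cnj (u $ \<sigma>) else 0"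
  have e: "cond_exp S D $ \<sigma> $ \<tau> * v $ \<tau> * cnj (u $ \<sigma>) = (\<Sum>\<rho>\<in>R. ?H \<sigma> \<tau> \<rho>) / ?N" for \<sigma> \<tau>
    by (cases "agree S \<sigma> \<tau>") (simp_all add: cond_exp_entry R_def sum_distrib_right sum_divide_distrib)
  have "(\<Sum>\<sigma>\<in>UNIV. (cond_exp S D *v v) $ \<sigma> * cnj (u $ \<sigma>)) =
        (\<Sum>\<sigma>\<in>UNIV. \<Sum>\<tau>\<in>UNIV. cond_exp S D $ \<sigma> $ \<tau> * v $ \<tau> * cnj (u $ \<sigma>))"
    by (simp add: matrix_vector_mult_def sum_distrib_right)
  also have "\<dots> = (\<Sum>\<sigma>\<in>UNIV. \<Sum>\<tau>\<in>UNIV. \<Sum>\<rho>\<in>R. ?H \<sigma> \<tau> \<rho>) / ?N"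
    by (simp add: e sum_divide_distrib)
  also have "(\<Sum>\<sigma>\<in>UNIV. \<Sum>\<tau>\<in>UNIV. \<Sum>\<rho>\<in>R. ?H \<sigma> \<tau> \<rho>) = (\<Sum>\<sigma>\<in>UNIV. \<Sum>\<rho>\<in>R. \<Sum>\<tau>\<in>UNIV. ?H \<sigma> \<tau> \<rho>)"
    by (rule sum.cong[OF refl]) (rule sum.swap)
  also have "\<dots> = (\<Sum>\<rho>\<in>R. \<Sum>\<sigma>\<in>UNIV. \<Sum>\<tau>\<in>UNIV. ?H \<sigma> \<tau> \<rho>)"
    by (rule sum.swap)
  also have "\<dots> = (\<Sum>\<rho>\<in>R. \<Sum>\<gamma>\<in>R. \<Sum>\<kappa>\<in>UNIV. (D *v vblk S v \<gamma> \<rho>) $ \<kappa> * cnj (vblk S u \<gamma> \<rho> $ \<kappa>))"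
  proof (rule sum.cong[OF refl])
    fix \<rho>
    let ?G = "\<lambda>\<sigma> \<tau> \<gamma>. if agree S \<sigma> \<gamma> \<and> agree S \<tau> \<gamma> then D $ join S \<sigma> \<rho> $ join S \<tau> \<rho> * v $ \<tau> * cnj (u $ \<sigma>) else 0"
    have "(\<Sum>\<sigma>\<in>UNIV. \<Sum>\<tau>\<in>UNIV. ?H \<sigma> \<tau> \<rho>) = (\<Sum>\<sigma>\<in>UNIV. \<Sum>\<tau>\<in>UNIV. \<Sum>\<gamma>\<in>R. ?G \<sigma> \<tau> \<gamma>)"
      unfolding R_def by (intro sum.cong refl) (simp add: unique_gamma)
    also have "\<dots> = (\<Sum>\<sigma>\<in>UNIV. \<Sum>\<gamma>\<in>R. \<Sum>\<tau>\<in>UNIV. ?G \<sigma> \<tau> \<gamma>)"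
      by (rule sum.cong[OF refl]) (rule sum.swap)
    also have "\<dots> = (\<Sum>\<gamma>\<in>R. \<Sum>\<sigma>\<in>UNIV. \<Sum>\<tau>\<in>UNIV. ?G \<sigma> \<tau> \<gamma>)"
      by (rule sum.swap)
    also have "\<dots> = (\<Sum>\<gamma>\<in>R. \<Sum>\<kappa>\<in>UNIV. (D *v vblk S v \<gamma> \<rho>) $ \<kappa> * cnj (vblk S u \<gamma> \<rho> $ \<kappa>))"
      by (rule sum.cong[OF refl]) (rule block_inner)
    finally show "(\<Sum>\<sigma>\<in>UNIV. \<Sum>\<tau>\<in>UNIV. ?H \<sigma> \<tau> \<rho>) = \<dots>" .
  qed
  finally show ?thesis .
qed


lemma opnorm_apply: "norm ((M::complex^'n::finite^'m::finite) *v v) \<le> opnorm M * norm v"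
  unfolding opnorm_def by (rule onorm[OF bounded_linear_mv])

lemma opnorm_nonneg: "opnorm (M::complex^'n::finite^'m::finite) \<ge> 0"
  unfolding opnorm_def by (rule onorm_pos_le[OF bounded_linear_mv])

lemma cond_exp_inner_bound:
  fixes D :: "('a::finite,'q::finite) obs" and u v :: "complex^('a \<Rightarrow> 'q)" and S :: "'a set"
  shows "inner (cond_exp S D *v v) u \<le> opnorm D * norm v * norm u"
proof -
  define R where "R = (configs_on (- S) :: ('a \<Rightarrow> 'q) set)"
  have finR: "finite R" unfolding R_def by (rule configs_finite)
  have NR: "card R > 0" unfolding R_def by (rule card_configs_pos)
  define a where "a = (\<lambda>\<gamma>. norm (vslice S v \<gamma>))"
  define b where "b = (\<lambda>\<gamma>. norm (vslice S u \<gamma>))"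
  have blk: "inner (D *v vblk S v \<gamma> \<rho>) (vblk S u \<gamma> \<rho>) \<le> opnorm D * (a \<gamma> * b \<gamma>)" for \<gamma> \<rho>
  proof -
    have "inner (D *v vblk S v \<gamma> \<rho>) (vblk S u \<gamma> \<rho>) \<le> norm (D *v vblk S v \<gamma> \<rho>) * norm (vblk S u \<gamma> \<rho>)"
      by (rule norm_cauchy_schwarz)
    also have "\<dots> \<le> (opnorm D * norm (vblk S v \<gamma> \<rho>)) * norm (vblk S u \<gamma> \<rho>)"
      by (intro mult_right_mono opnorm_apply norm_ge_zero)
    finally show ?thesis by (simp add: norm_vblk a_def b_def mult_ac)
  qed
  have "inner (cond_exp S D *v v) u = Re (\<Sum>\<sigma>\<in>UNIV. (cond_exp S D *v v) $ \<sigma> * cnj (u $ \<sigma>))"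
    by (rule inner_cvec)
  also have "\<dots> = (\<Sum>\<rho>\<in>R. \<Sum>\<gamma>\<in>R. inner (D *v vblk S v \<gamma> \<rho>) (vblk S u \<gamma> \<rho>)) / real (card R)"
    unfolding cond_exp_bilinear R_def[symmetric] by (simp add: Re_sum inner_cvec Re_divide_of_nat)
  also have "\<dots> \<le> (\<Sum>\<rho>\<in>R. \<Sum>\<gamma>\<in>R. opnorm D * (a \<gamma> * b \<gamma>)) / real (card R)"
    by (intro divide_right_mono sum_mono blk) simp
  also have "\<dots> = opnorm D * (\<Sum>\<gamma>\<in>R. a \<gamma> * b \<gamma>)"
    using NR by (simp add: sum_distrib_left[symmetric])
  also have "\<dots> \<le> opnorm D * (L2_set a R * L2_set b R)"
  proof (intro mult_left_mono opnorm_nonneg)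
    show "(\<Sum>\<gamma>\<in>R. a \<gamma> * b \<gamma>) \<le> L2_set a R * L2_set b R"
      using L2_set_mult_ineq[where f=a and g=b and A=R] by (simp add: a_def b_def)
  qed
  also have "L2_set a R = norm v"
    unfolding L2_set_def a_def R_def sum_slices by simp
  also have "L2_set b R = norm u"
    unfolding L2_set_def b_def R_def sum_slices by simp
  finally show ?thesis by (simp add: mult_ac)
qed

lemma cond_exp_contr:
  fixes D :: "('a::finite,'q::finite) obs"
  shows "opnorm (cond_exp S D) \<le> opnorm D"
  unfolding opnorm_def[of "cond_exp S D"]
proof (rule onorm_bound)
  show "0 \<le> opnorm D" by (rule opnorm_nonneg)
  fix v :: "complex^('a \<Rightarrow> 'q)"
  let ?w = "cond_exp S D *v v"
  have "(norm ?w)\<^sup>2 \<le> opnorm D * norm v * norm ?w"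
    unfolding power2_norm_eq_inner by (rule cond_exp_inner_bound)
  then show "norm ?w \<le> opnorm D * norm v"
    by (cases "norm ?w = 0") (simp_all add: opnorm_nonneg power2_eq_square)
qed




lemma scaled_commute:
  fixes x y :: "'a::real_normed_algebra"
  assumes "x * y = y * x"
  shows "(s *\<^sub>R x) * (r *\<^sub>R y) = (r *\<^sub>R y) * (s *\<^sub>R x)"
  using assms by (simp add: mult_ac)

lemma exp3:
  fixes x y z :: "'a::{real_normed_algebra_1,banach}"
  assumes "x * y = y * x" "x * z = z * x" "y * z = z * y"
  shows "exp (x + y + z) = exp x * exp y * exp z"
proof -
  have "(x + y) * z = z * (x + y)" using assms by (simp add: algebra_simps)
  then have "exp (x + y + z) = exp (x + y) * exp z" by (rule exp_add_commuting)
  also have "exp (x + y) = exp x * exp y" using assms(1) by (rule exp_add_commuting)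
  finally show ?thesis .
qed

lemma core_conj:
  fixes a jw jp jq :: "'n::finite cop"
  assumes c1: "jw * jp = jp * jw" and c2: "jw * jq = jq * jw" and c3: "jp * jq = jq * jp"
    and c4: "jq * a = a * jq"
  shows "exp (t *\<^sub>R (jw + jp + jq)) * a * exp ((- t) *\<^sub>R (jw + jp + jq)) =
         exp (t *\<^sub>R jw) * (exp (t *\<^sub>R jp) * a * exp ((- t) *\<^sub>R jp)) * exp ((- t) *\<^sub>R jw)"
proof -
  let ?eW = "exp (t *\<^sub>R jw)" and ?eP = "exp (t *\<^sub>R jp)" and ?eQ = "exp (t *\<^sub>R jq)"
  let ?fW = "exp ((- t) *\<^sub>R jw)" and ?fP = "exp ((- t) *\<^sub>R jp)" and ?fQ = "exp ((- t) *\<^sub>R jq)"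
  have e1: "exp (t *\<^sub>R (jw + jp + jq)) = ?eW * ?eP * ?eQ"
    unfolding scaleR_add_right by (intro exp3 scaled_commute c1 c2 c3)
  have e2: "exp ((- t) *\<^sub>R (jw + jp + jq)) = ?fQ * ?fP * ?fW"
  proof -
    have "(- t) *\<^sub>R (jw + jp + jq) = (- t) *\<^sub>R jq + (- t) *\<^sub>R jp + (- t) *\<^sub>R jw"
      by (simp add: algebra_simps)
    also have "exp \<dots> = ?fQ * ?fP * ?fW"
      by (intro exp3 scaled_commute c1[symmetric] c2[symmetric] c3[symmetric])
    finally show ?thesis .
  qed
  have qa: "?eQ * a = a * ?eQ"
    by (rule exp_commute) (simp add: c4)
  have qq: "?eQ * ?fQ = 1"
  proof -
    have "?eQ * ?fQ = exp (t *\<^sub>R jq + (- t) *\<^sub>R jq)"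
      by (rule exp_add_commuting[symmetric]) (rule scaled_commute, rule refl)
    then show ?thesis by simp
  qed
  have "?eW * ?eP * ?eQ * a * (?fQ * ?fP * ?fW) = ?eW * ?eP * (?eQ * a) * ?fQ * ?fP * ?fW"
    by (simp add: mult.assoc)
  also have "\<dots> = ?eW * ?eP * a * (?eQ * ?fQ) * ?fP * ?fW"
    by (simp add: qa mult.assoc)
  also have "\<dots> = ?eW * (?eP * a * ?fP) * ?fW"
    by (simp only: qq mult.assoc mult_1_left)
  finally have calc: "?eW * ?eP * ?eQ * a * (?fQ * ?fP * ?fW) = ?eW * (?eP * a * ?fP) * ?fW" .
  show ?thesis unfolding e1 e2 by (rule calc)
qed

lemma sum_commute:
  fixes f g :: "'b \<Rightarrow> 'a::ring"
  assumes "\<And>i j. i \<in> A \<Longrightarrow> j \<in> B \<Longrightarrow> f i * g j = g j * f i"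
  shows "sum f A * sum g B = sum g B * sum f A"
proof -
  have "sum f A * sum g B = (\<Sum>i\<in>A. \<Sum>j\<in>B. f i * g j)" by (rule sum_product)
  also have "\<dots> = (\<Sum>i\<in>A. \<Sum>j\<in>B. g j * f i)" using assms by (intro sum.cong refl) auto
  also have "\<dots> = (\<Sum>j\<in>B. \<Sum>i\<in>A. g j * f i)" by (rule sum.swap)
  also have "\<dots> = sum g B * sum f A" by (simp add: sum_product)
  finally show ?thesis .
qed

lemma sum_commute1:
  fixes f :: "'b \<Rightarrow> 'a::ring"
  assumes "\<And>i. i \<in> A \<Longrightarrow> f i * c = c * f i"
  shows "sum f A * c = c * sum f A"
  using assms by (simp add: sum_distrib_left sum_distrib_right)

lemma sum_split3:
  fixes f :: "'b::finite \<Rightarrow> 'c::comm_monoid_add"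
  shows "sum f UNIV = sum f {Z. P Z \<and> Q Z} + sum f {Z. P Z \<and> \<not> Q Z} + sum f {Z. \<not> P Z}"
proof -
  have "sum f UNIV = (\<Sum>Z\<in>UNIV. (if P Z \<and> Q Z then f Z else 0) + (if P Z \<and> \<not> Q Z then f Z else 0) + (if \<not> P Z then f Z else 0))"
    by (intro sum.cong refl) auto
  also have "\<dots> = sum f {Z. P Z \<and> Q Z} + sum f {Z. P Z \<and> \<not> Q Z} + sum f {Z. \<not> P Z}"
    by (simp only: sum.distrib sum_if_UNIV)
  finally show ?thesis .
qed

lemma cadj_add: "cadj (A + B) = cadj A + cadj B"
  by (simp add: cadj_def vec_eq_iff)

lemma self_adjoint_sum:
  assumes "\<And>x. x \<in> T \<Longrightarrow> self_adjoint (f x)"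
  shows "self_adjoint (sum f T)"
  using assms
proof (induction T rule: infinite_finite_induct)
  case (infinite A) then show ?case by (simp add: self_adjoint_def cadj_def vec_eq_iff)
next
  case empty then show ?case by (simp add: self_adjoint_def cadj_def vec_eq_iff)
next
  case (insert x F) then show ?case by (simp add: self_adjoint_def cadj_add)
qed


section \<open>Decomposition of the dynamics\<close>

lemma J_add: "J (M + N) = J M + J N"
  by (simp add: J_eq mop_add distrib_left)

lemma commuting_mult: "commuting \<Psi> \<Longrightarrow> \<Psi> Z ** \<Psi> Z' = \<Psi> Z' ** \<Psi> Z"
  unfolding commuting_def commutator_def by (metis eq_iff_diff_eq_0)

lemma commuting_J_sum:
  fixes \<Psi> :: "'a::finite set \<Rightarrow> ('a,'q::finite) obs"
  assumes "commuting \<Psi>"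
  shows "J (sum \<Psi> T1) * J (sum \<Psi> T2) = J (sum \<Psi> T2) * J (sum \<Psi> T1)"
  unfolding J_sum by (rule sum_commute) (rule J_commute[OF commuting_mult[OF assms]])

lemma interaction_local: "interaction \<Psi> \<Longrightarrow> \<Psi> Z \<in> local_alg Z"
  by (simp add: interaction_def)

lemma interaction_sa: "interaction \<Psi> \<Longrightarrow> self_adjoint (sum \<Psi> T)"
  by (rule self_adjoint_sum) (simp add: interaction_def)

lemma tau_decomp:
  fixes \<Psi> :: "'a::finite set \<Rightarrow> ('a,'q::finite) obs" and X :: "'a set" and bad :: "'a set \<Rightarrow> bool"
  assumes int: "interaction \<Psi>" and com: "commuting \<Psi>" and A: "A \<in> local_alg X"
  defines "W \<equiv> sum \<Psi> {Z. Z \<inter> X \<noteq> {} \<and> bad Z}" and "P \<equiv> sum \<Psi> {Z. Z \<inter> X \<noteq> {} \<and> \<not> bad Z}"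
  shows "mop (tau \<Psi> t A) = exp (t *\<^sub>R J W) *
     mop (mexp (cscale (\<i> * of_real t) P) ** A ** mexp (cscale (- \<i> * of_real t) P)) * exp ((- t) *\<^sub>R J W)"
proof -
  define Q where "Q = sum \<Psi> {Z. \<not> Z \<inter> X \<noteq> {}}"
  have H: "hamiltonian \<Psi> = W + P + Q"
    unfolding hamiltonian_def W_def P_def Q_def by (rule sum_split3)
  have JH: "J (hamiltonian \<Psi>) = J W + J P + J Q" by (simp add: H J_add)
  have qa: "J Q * mop A = mop A * J Q"
    unfolding Q_def J_sum
  proof (rule sum_commute1)
    fix Z assume "Z \<in> {Z. \<not> Z \<inter> X \<noteq> {}}"
    then have "Z \<inter> X = {}" by simp
    then show "J (\<Psi> Z) * mop A = mop A * J (\<Psi> Z)"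
      by (intro J_commute_mop local_alg_commute[OF _ interaction_local[OF int] A])
  qed
  have e: "mop (mexp (cscale (\<i> * of_real s) M)) = exp (s *\<^sub>R J M)"
          "mop (mexp (cscale (- \<i> * of_real s) M)) = exp ((- s) *\<^sub>R J M)" for s M
    by (simp_all only: mop_mexp cscale_scaleR_i cscale_scaleR_mi mop_scaleR J_def)
  have "mop (tau \<Psi> t A) = exp (t *\<^sub>R (J W + J P + J Q)) * mop A * exp ((- t) *\<^sub>R (J W + J P + J Q))"
    unfolding tau_def mop_mult e JH ..
  also have "\<dots> = exp (t *\<^sub>R J W) * (exp (t *\<^sub>R J P) * mop A * exp ((- t) *\<^sub>R J P)) * exp ((- t) *\<^sub>R J W)"
    unfolding W_def P_def Q_def
    by (intro core_conj commuting_J_sum com qa[unfolded Q_def])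
  also have "exp (t *\<^sub>R J P) * mop A * exp ((- t) *\<^sub>R J P) =
      mop (mexp (cscale (\<i> * of_real t) P) ** A ** mexp (cscale (- \<i> * of_real t) P))"
    unfolding mop_mult e ..
  finally show ?thesis .
qed




section \<open>Combinatorial bound\<close>

lemma graph_dist_nonneg: "graph_dist E x y \<ge> 0"
  by (simp add: graph_dist_def)

lemma graph_dist_refl: "graph_dist E x x = 0"
proof -
  have "walk_len E 0 x x" unfolding walk_len_def by (rule exI[where x = "\<lambda>_. x"]) simp
  then show ?thesis unfolding graph_dist_def by (simp add: Least_eq_0)
qed

lemma subset_nbhd: "r \<ge> 0 \<Longrightarrow> X \<subseteq> nbhd E X r"
proof
  fix x assume "r \<ge> 0" "x \<in> X"
  then show "x \<in> nbhd E X r" unfolding nbhd_def using graph_dist_refl[of E x] by (intro CollectI bexI[of _ x]) simp_all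
qed

lemma F_norm_ge:
  fixes \<Psi> :: "'a::finite set \<Rightarrow> ('a,'q::finite) obs"
  assumes "decaying F"
  shows "(\<Sum>Z\<in>{Z. x \<in> Z \<and> y \<in> Z}. opnorm (\<Psi> Z)) \<le> F_norm E F \<Psi> * F (graph_dist E x y)"
proof -
  define f where "f = (\<lambda>x y. (\<Sum>Z\<in>{Z. x \<in> Z \<and> y \<in> Z}. opnorm (\<Psi> Z)) / F (graph_dist E x y))"
  have Fpos: "F (graph_dist E x y) > 0"
    using assms graph_dist_nonneg[of E x y] unfolding decaying_def by blast
  have sub: "{f x y | x y. True} \<subseteq> (\<lambda>p. f (fst p) (snd p)) ` UNIV"
  proof
    fix z assume "z \<in> {f x y | x y. True}"
    then obtain x y where "z = f x y" by blast
    then show "z \<in> (\<lambda>p. f (fst p) (snd p)) ` UNIV" by (intro image_eqI[of _ _ "(x, y)"]) simp_all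
  qed
  have fin: "finite {f x y | x y. True}"
    by (rule finite_subset[OF sub]) simp
  have mem: "f x y \<in> {f x y | x y. True}" by blast
  have "f x y \<le> Max {f x y | x y. True}" by (rule Max_ge[OF fin mem])
  also have "Max {f x y | x y. True} = F_norm E F \<Psi>" unfolding F_norm_def f_def ..
  finally have "f x y \<le> F_norm E F \<Psi>" .
  then show ?thesis using Fpos unfolding f_def by (simp add: divide_le_eq)
qed

lemma W_bound:
  fixes \<Psi> :: "'a::finite set \<Rightarrow> ('a,'q::finite) obs"
  assumes "decaying F"
  shows "(\<Sum>Z\<in>{Z. Z \<inter> X \<noteq> {} \<and> Z \<inter> Y \<noteq> {}}. opnorm (\<Psi> Z)) \<le> F_norm E F \<Psi> * (\<Sum>x\<in>X. \<Sum>y\<in>Y. F (graph_dist E x y))"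
proof -
  let ?T = "{Z. Z \<inter> X \<noteq> {} \<and> Z \<inter> Y \<noteq> {}}"
  let ?n = "\<lambda>Z. opnorm (\<Psi> Z)"
  have n0: "?n Z \<ge> 0" for Z by (rule opnorm_nonneg)
  have each: "?n Z \<le> (\<Sum>x\<in>X. \<Sum>y\<in>Y. if x \<in> Z \<and> y \<in> Z then ?n Z else 0)" if ZT: "Z \<in> ?T" for Z
  proof -
    obtain x0 y0 where x0: "x0 \<in> Z" "x0 \<in> X" and y0: "y0 \<in> Z" "y0 \<in> Y" using ZT by blast
    have "?n Z = (if x0 \<in> Z \<and> y0 \<in> Z then ?n Z else 0)" using x0 y0 by simp
    also have "\<dots> \<le> (\<Sum>y\<in>Y. if x0 \<in> Z \<and> y \<in> Z then ?n Z else 0)"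
      by (rule member_le_sum[OF y0(2)]) (simp_all add: n0)
    also have "\<dots> \<le> (\<Sum>x\<in>X. \<Sum>y\<in>Y. if x \<in> Z \<and> y \<in> Z then ?n Z else 0)"
      by (rule member_le_sum[OF x0(2), where f = "\<lambda>x. \<Sum>y\<in>Y. if x \<in> Z \<and> y \<in> Z then ?n Z else 0"])
         (simp_all add: n0 sum_nonneg)
    finally show ?thesis .
  qed
  have "(\<Sum>Z\<in>?T. ?n Z) \<le> (\<Sum>Z\<in>?T. \<Sum>x\<in>X. \<Sum>y\<in>Y. if x \<in> Z \<and> y \<in> Z then ?n Z else 0)"
    by (rule sum_mono) (rule each)
  also have "\<dots> = (\<Sum>x\<in>X. \<Sum>Z\<in>?T. \<Sum>y\<in>Y. if x \<in> Z \<and> y \<in> Z then ?n Z else 0)"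
    by (rule sum.swap)
  also have "\<dots> = (\<Sum>x\<in>X. \<Sum>y\<in>Y. \<Sum>Z\<in>?T. if x \<in> Z \<and> y \<in> Z then ?n Z else 0)"
    by (rule sum.cong[OF refl]) (rule sum.swap)
  also have "\<dots> \<le> (\<Sum>x\<in>X. \<Sum>y\<in>Y. \<Sum>Z\<in>{Z. x \<in> Z \<and> y \<in> Z}. ?n Z)"
  proof (intro sum_mono)
    fix x y
    have "(\<Sum>Z\<in>?T. if x \<in> Z \<and> y \<in> Z then ?n Z else 0) \<le> (\<Sum>Z\<in>UNIV. if x \<in> Z \<and> y \<in> Z then ?n Z else 0)"
      by (rule sum_mono2) (simp_all add: n0)
    also have "\<dots> = (\<Sum>Z\<in>{Z. x \<in> Z \<and> y \<in> Z}. ?n Z)" by (rule sum_if_UNIV)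
    finally show "(\<Sum>Z\<in>?T. if x \<in> Z \<and> y \<in> Z then ?n Z else 0) \<le> (\<Sum>Z\<in>{Z. x \<in> Z \<and> y \<in> Z}. ?n Z)" .
  qed
  also have "\<dots> \<le> (\<Sum>x\<in>X. \<Sum>y\<in>Y. F_norm E F \<Psi> * F (graph_dist E x y))"
    by (intro sum_mono F_norm_ge assms)
  also have "\<dots> = F_norm E F \<Psi> * (\<Sum>x\<in>X. \<Sum>y\<in>Y. F (graph_dist E x y))"
    by (simp add: sum_distrib_left)
  finally show ?thesis .
qed

lemma opnorm_sum_le: "opnorm (sum f T) \<le> (\<Sum>Z\<in>T. opnorm (f Z :: complex^'n::finite^'n))"
  by (simp add: opnorm_mop mop_sum norm_sum)




lemma mop_conj:
  "mop (mexp (cscale (\<i> * of_real t) P) ** A ** mexp (cscale (- \<i> * of_real t) P)) =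
   exp (t *\<^sub>R J P) * mop A * exp ((- t) *\<^sub>R J P)"
  by (simp only: mop_mult mop_mexp cscale_scaleR_i cscale_scaleR_mi mop_scaleR J_def)

lemma opnorm_diff_le: "opnorm (M - N) \<le> opnorm M + opnorm (N :: complex^'n::finite^'n)"
  by (simp add: opnorm_mop mop_diff norm_triangle_ineq4)

lemma conj_estimate:
  fixes \<Psi> :: "'a::finite set \<Rightarrow> ('a,'q::finite) obs" and bad :: "'a set \<Rightarrow> bool" and t :: real
  assumes int: "interaction \<Psi>" and com: "commuting \<Psi>" and A: "A \<in> local_alg X"
  defines "W \<equiv> sum \<Psi> {Z. Z \<inter> X \<noteq> {} \<and> bad Z}" and "P \<equiv> sum \<Psi> {Z. Z \<inter> X \<noteq> {} \<and> \<not> bad Z}"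
  defines "Cm \<equiv> mexp (cscale (\<i> * of_real t) P) ** A ** mexp (cscale (- \<i> * of_real t) P)"
  shows "norm (mop (tau \<Psi> t A) - mop Cm) \<le> 2 * \<bar>t\<bar> * opnorm W * opnorm A"
    and "opnorm Cm \<le> opnorm A"
proof -
  have sW: "skew (J W)" unfolding W_def by (intro skew_J interaction_sa int)
  have sP: "skew (J P)" unfolding P_def by (intro skew_J interaction_sa int)
  have c: "mop Cm = exp (t *\<^sub>R J P) * mop A * exp ((- t) *\<^sub>R J P)"
    unfolding Cm_def by (rule mop_conj)
  have cn: "norm (mop Cm) \<le> norm (mop A)" unfolding c by (rule skew_conj_norm[OF sP])
  then show "opnorm Cm \<le> opnorm A" by (simp add: opnorm_mop)
  have "mop (tau \<Psi> t A) = exp (t *\<^sub>R J W) * mop Cm * exp ((- t) *\<^sub>R J W)"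
    unfolding Cm_def W_def P_def by (rule tau_decomp[OF int com A])
  then have "norm (mop (tau \<Psi> t A) - mop Cm) \<le> 2 * \<bar>t\<bar> * norm (J W) * norm (mop Cm)"
    using skew_conj_diff[OF sW] by simp
  also have "\<dots> \<le> 2 * \<bar>t\<bar> * opnorm W * opnorm A"
    using cn J_norm[of W] by (intro mult_mono) (simp_all add: opnorm_mop)
  finally show "norm (mop (tau \<Psi> t A) - mop Cm) \<le> 2 * \<bar>t\<bar> * opnorm W * opnorm A" .
qed

lemma part_i:
  fixes \<Psi> :: "'a::finite set \<Rightarrow> ('a,'q::finite) obs"
  assumes int: "interaction \<Psi>" and com: "commuting \<Psi>" and dec: "decaying F"
    and XY: "X \<inter> Y = {}" and A: "A \<in> local_alg X" and B: "B \<in> local_alg Y"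
  shows "opnorm (commutator (tau \<Psi> t A) B)
          \<le> 4 * F_norm E F \<Psi> * opnorm A * opnorm B * \<bar>t\<bar> * (\<Sum>x\<in>X. \<Sum>y\<in>Y. F (graph_dist E x y))"
proof -
  define bad where "bad = (\<lambda>Z::'a set. Z \<inter> Y \<noteq> {})"
  define W where "W = sum \<Psi> {Z. Z \<inter> X \<noteq> {} \<and> bad Z}"
  define P where "P = sum \<Psi> {Z. Z \<inter> X \<noteq> {} \<and> \<not> bad Z}"
  define Cm where "Cm = mexp (cscale (\<i> * of_real t) P) ** A ** mexp (cscale (- \<i> * of_real t) P)"
  let ?a = "mop A" and ?b = "mop B" and ?c = "mop Cm" and ?\<tau> = "mop (tau \<Psi> t A)"
  have est: "norm (?\<tau> - ?c) \<le> 2 * \<bar>t\<bar> * opnorm W * opnorm A"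
    unfolding W_def P_def Cm_def by (rule conj_estimate[OF int com A])
  have pb: "J P * ?b = ?b * J P"
    unfolding P_def J_sum
  proof (rule sum_commute1)
    fix Z assume "Z \<in> {Z. Z \<inter> X \<noteq> {} \<and> \<not> bad Z}"
    then have "Z \<inter> Y = {}" by (simp add: bad_def)
    then show "J (\<Psi> Z) * ?b = ?b * J (\<Psi> Z)"
      by (intro J_commute_mop local_alg_commute[OF _ interaction_local[OF int] B])
  qed
  have eb: "exp (s *\<^sub>R J P) * ?b = ?b * exp (s *\<^sub>R J P)" for s
    by (rule exp_commute) (simp add: pb)
  have ab: "?a * ?b = ?b * ?a"
    by (simp add: mop_mult[symmetric] local_alg_commute[OF XY A B])
  have cb: "?c * ?b = ?b * ?c"
  proof -
    let ?eP = "exp (t *\<^sub>R J P)" and ?fP = "exp ((- t) *\<^sub>R J P)"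
    have "?c * ?b = ?eP * ?a * ?fP * ?b"
      unfolding Cm_def mop_conj ..
    also have "\<dots> = ?eP * ?a * (?fP * ?b)" by (simp only: mult.assoc)
    also have "\<dots> = ?eP * ?a * (?b * ?fP)" by (simp only: eb)
    also have "\<dots> = ?eP * (?a * ?b) * ?fP" by (simp only: mult.assoc)
    also have "\<dots> = ?eP * (?b * ?a) * ?fP" by (simp only: ab)
    also have "\<dots> = (?eP * ?b) * ?a * ?fP" by (simp only: mult.assoc)
    also have "\<dots> = (?b * ?eP) * ?a * ?fP" by (simp only: eb)
    also have "\<dots> = ?b * (?eP * ?a * ?fP)" by (simp only: mult.assoc)
    also have "\<dots> = ?b * ?c"
      unfolding Cm_def mop_conj ..
    finally show ?thesis .
  qed
  have "mop (commutator (tau \<Psi> t A) B) = (?\<tau> - ?c) * ?b - ?b * (?\<tau> - ?c)"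
    by (simp add: commutator_def mop_diff mop_mult algebra_simps cb)
  then have "opnorm (commutator (tau \<Psi> t A) B) \<le> norm ((?\<tau> - ?c) * ?b) + norm (?b * (?\<tau> - ?c))"
    by (simp add: opnorm_mop norm_triangle_ineq4)
  also have "\<dots> \<le> norm (?\<tau> - ?c) * norm ?b + norm ?b * norm (?\<tau> - ?c)"
    by (intro add_mono norm_mult_ineq)
  also have "\<dots> = 2 * norm ?b * norm (?\<tau> - ?c)" by simp
  also have "\<dots> \<le> 2 * norm ?b * (2 * \<bar>t\<bar> * opnorm W * opnorm A)"
    by (intro mult_left_mono est) simp
  also have "\<dots> = 4 * opnorm A * opnorm B * \<bar>t\<bar> * opnorm W"
    by (simp add: opnorm_mop)
  also have "\<dots> \<le> 4 * opnorm A * opnorm B * \<bar>t\<bar> * (F_norm E F \<Psi> * (\<Sum>x\<in>X. \<Sum>y\<in>Y. F (graph_dist E x y)))"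
  proof (intro mult_left_mono)
    have "opnorm W \<le> (\<Sum>Z\<in>{Z. Z \<inter> X \<noteq> {} \<and> Z \<inter> Y \<noteq> {}}. opnorm (\<Psi> Z))"
      unfolding W_def bad_def by (rule opnorm_sum_le)
    also have "\<dots> \<le> F_norm E F \<Psi> * (\<Sum>x\<in>X. \<Sum>y\<in>Y. F (graph_dist E x y))"
      by (rule W_bound[OF dec])
    finally show "opnorm W \<le> F_norm E F \<Psi> * (\<Sum>x\<in>X. \<Sum>y\<in>Y. F (graph_dist E x y))" .
  qed (simp_all add: opnorm_nonneg)
  finally show ?thesis by (simp add: mult_ac)
qed

lemma part_ii:
  fixes \<Psi> :: "'a::finite set \<Rightarrow> ('a,'q::finite) obs"
  assumes int: "interaction \<Psi>" and com: "commuting \<Psi>" and dec: "decaying F"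
    and A: "A \<in> local_alg X" and r: "r \<ge> 0"
  shows "opnorm (tau \<Psi> t A - cond_exp (nbhd E X r) (tau \<Psi> t A))
          \<le> 4 * F_norm E F \<Psi> * opnorm A * \<bar>t\<bar> * (\<Sum>x\<in>X. \<Sum>y\<in>UNIV - nbhd E X r. F (graph_dist E x y))"
proof -
  define S where "S = nbhd E X r"
  define bad where "bad = (\<lambda>Z::'a set. Z \<inter> (UNIV - S) \<noteq> {})"
  define W where "W = sum \<Psi> {Z. Z \<inter> X \<noteq> {} \<and> bad Z}"
  define P where "P = sum \<Psi> {Z. Z \<inter> X \<noteq> {} \<and> \<not> bad Z}"
  define Cm where "Cm = mexp (cscale (\<i> * of_real t) P) ** A ** mexp (cscale (- \<i> * of_real t) P)"
  have est: "opnorm (tau \<Psi> t A - Cm) \<le> 2 * \<bar>t\<bar> * opnorm W * opnorm A"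
    using conj_estimate(1)[OF int com A, where bad=bad and t=t] unfolding W_def P_def Cm_def
    by (simp add: opnorm_mop mop_diff)
  have XS: "X \<subseteq> S" unfolding S_def by (rule subset_nbhd[OF r])
  have PS: "P \<in> local_alg S"
    unfolding P_def
  proof (rule local_alg_sum)
    fix Z assume "Z \<in> {Z. Z \<inter> X \<noteq> {} \<and> \<not> bad Z}"
    then have "Z \<subseteq> S" by (auto simp: bad_def)
    then show "\<Psi> Z \<in> local_alg S" using local_alg_mono interaction_local[OF int] by blast
  qed
  have AS: "A \<in> local_alg S" using local_alg_mono[OF XS] A by blast
  have CS: "Cm \<in> local_alg S"
    unfolding Cm_def by (intro local_alg_mult local_alg_mexp local_alg_cscale PS AS)
  have ce: "cond_exp S Cm = Cm" by (rule cond_exp_local[OF CS])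
  let ?T = "tau \<Psi> t A"
  have eq: "?T - cond_exp S ?T = (?T - Cm) - cond_exp S (?T - Cm)"
    by (simp add: cond_exp_diff ce)
  have "opnorm (?T - cond_exp S ?T) \<le> opnorm (?T - Cm) + opnorm (cond_exp S (?T - Cm))"
    unfolding eq by (rule opnorm_diff_le)
  also have "\<dots> \<le> opnorm (?T - Cm) + opnorm (?T - Cm)"
    by (intro add_left_mono cond_exp_contr)
  also have "\<dots> \<le> 2 * (2 * \<bar>t\<bar> * opnorm W * opnorm A)" using est by linarith
  also have "\<dots> = 4 * opnorm A * \<bar>t\<bar> * opnorm W" by simp
  also have "\<dots> \<le> 4 * opnorm A * \<bar>t\<bar> * (F_norm E F \<Psi> * (\<Sum>x\<in>X. \<Sum>y\<in>UNIV - S. F (graph_dist E x y)))"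
  proof (intro mult_left_mono)
    have "opnorm W \<le> (\<Sum>Z\<in>{Z. Z \<inter> X \<noteq> {} \<and> Z \<inter> (UNIV - S) \<noteq> {}}. opnorm (\<Psi> Z))"
      unfolding W_def bad_def by (rule opnorm_sum_le)
    also have "\<dots> \<le> F_norm E F \<Psi> * (\<Sum>x\<in>X. \<Sum>y\<in>UNIV - S. F (graph_dist E x y))"
      by (rule W_bound[OF dec])
    finally show "opnorm W \<le> F_norm E F \<Psi> * (\<Sum>x\<in>X. \<Sum>y\<in>UNIV - S. F (graph_dist E x y))" .
  qed (simp_all add: opnorm_nonneg)
  finally show ?thesis by (simp add: S_def mult_ac)
qed

theorem corollary3p8:
  fixes E :: "'a::finite \<Rightarrow> 'a \<Rightarrow> bool"
    and \<Psi> :: "'a set \<Rightarrow> ('a, 'q::finite) obs"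
    and F :: "real \<Rightarrow> real"
    and t :: real
  assumes "symp E"
    and "connected_graph E"
    and "interaction \<Psi>"
    and "commuting \<Psi>"
    and "decaying F"
  shows "(\<forall>X Y A B. X \<inter> Y = {} \<and> A \<in> local_alg X \<and> B \<in> local_alg Y \<longrightarrow>
            opnorm (commutator (tau \<Psi> t A) B)
              \<le> 4 * F_norm E F \<Psi> * opnorm A * opnorm B * \<bar>t\<bar>
                 * (\<Sum>x\<in>X. \<Sum>y\<in>Y. F (graph_dist E x y)))
       \<and> (\<forall>X A r. A \<in> local_alg X \<and> r \<ge> 0 \<longrightarrow>
            opnorm (tau \<Psi> t A - cond_exp (nbhd E X r) (tau \<Psi> t A))
              \<le> 4 * F_norm E F \<Psi> * opnorm A * \<bar>t\<bar>
                 * (\<Sum>x\<in>X. \<Sum>y\<in>UNIV - nbhd E X r. F (graph_dist E x y)))"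
  using part_i[OF assms(3,4,5)] part_ii[OF assms(3,4,5)] by blast


end
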